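(* Assume the setting and notation in the context. Suppose the scores $\{T_i\}_{i\in\mathcal C\cup\mathcal U}$ are continuous random variables and the residuals $\{R_i\}_{i\in\mathcal C\cup\mathcal U}$ are continuous random variables. Suppose the ranking threshold is test-driven: $\hat\kappa=\kappa(T_i:i\in\mathcal U)$ for a deterministic measurable $\kappa:\mathbb R^m\to\{1,\dots,m\}$. Suppose further there is a deterministic $t_u\in\mathbb R$ such that almost surely $\hat\kappa^{j\leftarrow t_u}=\hat\kappa$ for every $j\in\mathcal U$, where $\hat\kappa^{j\leftarrow t}$ denotes the value of $\kappa$ computed after replacing $T_j$ by $t$; and that $\hat\kappa\le m-1$ almost surely. Let $\hat{\mathcal S}_u=\{j\in\mathcal U:T_j\le T_{(\hat\kappa)}\}$, $\hat{\mathcal S}_c^+=\{i\in\mathcal C: T_i\le T_{(\hat\kappa+1)}\}$, and for $j\in\hat{\mathcal S}_u$ let $\mathrm{PI}_j=[\hat\mu(X_j)-Q_\alpha(\{R_i\}_{i\in\hat{\mathcal S}_c^+}),\ \hat\mu(X_j)+Q_\alpha(\{R_i\}_{i\in\hat{\mathcal S}_c^+})]$. Then $$\alpha-\mathbb E\Big[\frac{1}{(n+1)F_T(T_{(\hat\kappa+1)})}\Big]\le \mathrm{FCR}\le\alpha,$$ where $F_T$ is the common cumulative distribution function of the $T_i$.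
   Context: Setting: $\hat\mu:\mathbb R^d\to\mathbb R$ and $g:\mathbb R^d\to\mathbb R$ are fixed deterministic measurable functions. Calibration indices $\mathcal C$, $|\mathcal C|=n$; test indices $\mathcal U$ (disjoint), $|\mathcal U|=m\ge2$. The pairs $(X_i,Y_i)\in\mathbb R^d\times\mathbb R$, $i\in\mathcal C\cup\mathcal U$, are i.i.d. Scores $T_i=g(X_i)$, residuals $R_i=|Y_i-\hat\mu(X_i)|$, $\alpha\in(0,1)$. $T_{(r)}$ denotes the $r$-th smallest value of the test scores $\{T_i\}_{i\in\mathcal U}$. For a finite index set $S$, $Q_\alpha(\{R_i\}_{i\in S})$ is the $\lceil(1-\alpha)(|S|+1)\rceil$-th smallest value of $\{R_i\}_{i\in S}$, equal to $+\infty$ if that index exceeds $|S|$. $\mathrm{FCR}=\mathbb E\Big[\frac{|\{j\in\hat{\mathcal S}_u: Y_j\notin\mathrm{PI}_j\}|}{\max\{|\hat{\mathcal S}_u|,1\}}\Big]$. *)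

theory Defs
  imports "HOL-Probability.Probability" "HOL-Library.Multiset"
begin

definition kth_smallest :: "(nat \<Rightarrow> real) \<Rightarrow> nat set \<Rightarrow> nat \<Rightarrow> real" where
  "kth_smallest v S r = sorted_list_of_multiset (image_mset v (mset_set S)) ! (r - 1)"

definition conf_quantile :: "real \<Rightarrow> (nat \<Rightarrow> real) \<Rightarrow> nat set \<Rightarrow> ereal" where
  "conf_quantile \<alpha> v S =
     (let k = nat \<lceil>(1 - \<alpha>) * (real (card S) + 1)\<rceil>
      in if k > card S then \<infinity> else ereal (kth_smallest v S k))"

definition sel_test :: "(nat \<Rightarrow> real) \<Rightarrow> nat set \<Rightarrow> nat \<Rightarrow> nat set" where
  "sel_test T U k = {j \<in> U. T j \<le> kth_smallest T U k}"

definition sel_calib_plus :: "(nat \<Rightarrow> real) \<Rightarrow> nat set \<Rightarrow> nat set \<Rightarrow> nat \<Rightarrow> nat set" where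
  "sel_calib_plus T C U k = {i \<in> C. T i \<le> kth_smallest T U (k + 1)}"

definition pred_int :: "real \<Rightarrow> ereal \<Rightarrow> real set" where
  "pred_int mu Q = {y. ereal mu - Q \<le> ereal y \<and> ereal y \<le> ereal mu + Q}"

end

theory Submission
  imports Defs
begin

lemma sorted_nth_le_iff:
  fixes xs :: "real list"
  assumes "sorted xs" "1 \<le> r" "r \<le> length xs"
  shows "xs ! (r - 1) \<le> t \<longleftrightarrow> r \<le> length (filter (\<lambda>x. x \<le> t) xs)"
  using assms
proof (induction xs arbitrary: r)
  case Nil then show ?case by simp
next
  case (Cons x xs)
  show ?case
  proof (cases "r = 1")
    case True
    then show ?thesis using Cons.prems by (auto simp: Suc_le_eq filter_empty_conv)
  next
    case False
    then obtain r' where r': "r = Suc r'" "1 \<le> r'" using Cons.prems by (cases r) auto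
    have IH: "xs ! (r' - 1) \<le> t \<longleftrightarrow> r' \<le> length (filter (\<lambda>x. x \<le> t) xs)"
      using Cons r' by auto
    have nth: "(x # xs) ! (r - 1) = xs ! (r' - 1)" using r' by (cases r') auto
    show ?thesis
    proof (cases "x \<le> t")
      case True then show ?thesis using IH nth r' by auto
    next
      case False
      have "\<forall>y\<in>set xs. x \<le> y" using Cons.prems by auto
      hence f: "filter (\<lambda>x. x \<le> t) xs = []" using False by (auto simp: filter_empty_conv)
      have "x \<le> xs ! (r' - 1)" using Cons.prems r' \<open>\<forall>y\<in>set xs. x \<le> y\<close> by auto
      then show ?thesis using False f nth r' by auto
    qed
  qed
qed

lemma sorted_nth_less_iff:
  fixes xs :: "real list"
  assumes "sorted xs" "1 \<le> r" "r \<le> length xs"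
  shows "xs ! (r - 1) < t \<longleftrightarrow> r \<le> length (filter (\<lambda>x. x < t) xs)"
  using assms
proof (induction xs arbitrary: r)
  case Nil then show ?case by simp
next
  case (Cons x xs)
  show ?case
  proof (cases "r = 1")
    case True
    then show ?thesis using Cons.prems by (auto simp: Suc_le_eq filter_empty_conv)
  next
    case False
    then obtain r' where r': "r = Suc r'" "1 \<le> r'" using Cons.prems by (cases r) auto
    have IH: "xs ! (r' - 1) < t \<longleftrightarrow> r' \<le> length (filter (\<lambda>x. x < t) xs)"
      using Cons r' by auto
    have nth: "(x # xs) ! (r - 1) = xs ! (r' - 1)" using r' by (cases r') auto
    show ?thesis
    proof (cases "x < t")
      case True then show ?thesis using IH nth r' by auto
    next
      case False
      have "\<forall>y\<in>set xs. x \<le> y" using Cons.prems by auto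
      hence f: "filter (\<lambda>x. x < t) xs = []" using False by (auto simp: filter_empty_conv)
      have "x \<le> xs ! (r' - 1)" using Cons.prems r' \<open>\<forall>y\<in>set xs. x \<le> y\<close> by auto
      then show ?thesis using False f nth r' by auto
    qed
  qed
qed

lemma kth_list:
  assumes "finite S"
  shows "kth_smallest v S r = sorted_list_of_multiset (image_mset v (mset_set S)) ! (r - 1)"
    "sorted (sorted_list_of_multiset (image_mset v (mset_set S)))"
    "length (sorted_list_of_multiset (image_mset v (mset_set S))) = card S"
  using assms apply (auto simp: kth_smallest_def)
  by (metis mset_sorted_list_of_multiset size_image_mset size_mset size_mset_set)

lemma filter_len_card:
  assumes "finite S"
  shows "length (filter P (sorted_list_of_multiset (image_mset v (mset_set S)))) = card {l\<in>S. P (v l)}"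
proof -
  have "length (filter P (sorted_list_of_multiset (image_mset v (mset_set S))))
      = size (filter_mset P (image_mset v (mset_set S)))"
    by (metis mset_filter mset_sorted_list_of_multiset size_mset)
  also have "\<dots> = size (image_mset v (filter_mset (\<lambda>l. P (v l)) (mset_set S)))"
    by (simp add: filter_mset_image_mset)
  also have "\<dots> = card {l\<in>S. P (v l)}"
    using assms by (simp add: filter_mset_mset_set)
  finally show ?thesis .
qed

lemma kth_gt_iff:
  assumes "finite S" "1 \<le> r" "r \<le> card S"
  shows "t < kth_smallest v S r \<longleftrightarrow> card {l\<in>S. v l \<le> t} < r"
  using sorted_nth_le_iff[OF kth_list(2)[OF assms(1)] assms(2), of v t] assms
    kth_list[OF assms(1), of v] filter_len_card[OF assms(1), of "\<lambda>x. x \<le> t" v]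
  by (simp add: not_le[symmetric])

lemma kth_less_iff:
  assumes "finite S" "1 \<le> r" "r \<le> card S"
  shows "kth_smallest v S r < t \<longleftrightarrow> r \<le> card {l\<in>S. v l < t}"
  using sorted_nth_less_iff[OF kth_list(2)[OF assms(1)] assms(2), of v t] assms
    kth_list[OF assms(1), of v] filter_len_card[OF assms(1), of "\<lambda>x. x < t" v]
  by simp

lemma kth_cong:
  assumes "\<And>s. s \<in> S \<Longrightarrow> v s = w s"
  shows "kth_smallest v S r = kth_smallest w S r"
proof -
  have "image_mset v (mset_set S) = image_mset w (mset_set S)"
    by (rule image_mset_cong) (metis assms elem_mset_set finite_set_mset_mset_set mset_set.infinite set_mset_empty empty_iff)
  then show ?thesis by (simp add: kth_smallest_def)
qed

lemma kth_reindex: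
  assumes "inj_on s S"
  shows "kth_smallest (v \<circ> s) S r = kth_smallest v (s ` S) r"
proof -
  have "image_mset (v \<circ> s) (mset_set S) = image_mset v (image_mset s (mset_set S))"
    by (simp add: image_mset.compositionality)
  also have "image_mset s (mset_set S) = mset_set (s ` S)"
    using assms by (simp add: image_mset_mset_set)
  finally have "image_mset (v \<circ> s) (mset_set S) = image_mset v (mset_set (s ` S))" .
  then show ?thesis unfolding kth_smallest_def by metis
qed

lemma kth_out_of_range:
  assumes "finite S" "card S < r"
  shows "kth_smallest v S r = [] ! (r - 1 - card S)"
proof -
  have "\<And>xs::real list. length xs = card S \<Longrightarrow> xs ! (r - 1) = [] ! (r - 1 - card S)"
  proof -
    fix xs :: "real list" assume "length xs = card S"
    moreover have "\<And>d. xs ! (length xs + d) = [] ! d" by (induction xs) auto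
    moreover have "r - 1 = card S + (r - 1 - card S)" using assms(2) by simp
    ultimately show "xs ! (r - 1) = [] ! (r - 1 - card S)"
      by metis
  qed
  then show ?thesis using kth_list(1)[OF assms(1), of v r] kth_list(3)[OF assms(1), of v] by simp
qed

lemma card_le_kth_ge:
  fixes v :: "nat \<Rightarrow> real"
  assumes "finite S" "1 \<le> r" "r \<le> card S"
  shows "r \<le> card {l\<in>S. v l \<le> kth_smallest v S r}"
  using kth_gt_iff[OF assms, of "kth_smallest v S r" v] by simp

lemma card_le_kth_eq:
  fixes v :: "nat \<Rightarrow> real"
  assumes "finite S" "1 \<le> r" "r \<le> card S" "inj_on v S"
  shows "card {l\<in>S. v l \<le> kth_smallest v S r} = r"
proof -
  let ?x = "kth_smallest v S r"
  have lt: "card {l\<in>S. v l < ?x} < r"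
    using kth_less_iff[OF assms(1-3), of v ?x] by simp
  have "{l\<in>S. v l \<le> ?x} = {l\<in>S. v l < ?x} \<union> {l\<in>S. v l = ?x}" by auto
  hence "card {l\<in>S. v l \<le> ?x} \<le> card {l\<in>S. v l < ?x} + card {l\<in>S. v l = ?x}"
    using card_Un_le[of "{l\<in>S. v l < ?x}" "{l\<in>S. v l = ?x}"] by simp
  moreover have "card {l\<in>S. v l = ?x} \<le> 1"
  proof -
    have "\<forall>a\<in>{l\<in>S. v l = ?x}. \<forall>b\<in>{l\<in>S. v l = ?x}. a = b"
      using assms(4) by (auto simp: inj_on_def)
    thus ?thesis using card_le_Suc0_iff_eq[of "{l\<in>S. v l = ?x}"] assms(1) by simp
  qed
  ultimately show ?thesis using lt card_le_kth_ge[OF assms(1-3), of v] by linarith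
qed

lemma card_remove_less:
  fixes v :: "nat \<Rightarrow> real"
  assumes "finite U" "j \<in> U"
  shows "card {l\<in>U. v l < v j} = card {l\<in>U - {j}. v l < v j}"
  by (rule arg_cong[where f=card]) auto

lemma sel_iff:
  fixes v :: "nat \<Rightarrow> real"
  assumes "finite U" "j \<in> U" "1 \<le> k" "k \<le> card (U - {j})"
  shows "v j \<le> kth_smallest v U k \<longleftrightarrow> v j \<le> kth_smallest v (U - {j}) k"
proof -
  have "card (U - {j}) \<le> card U" using assms(1) by (simp add: card_Diff1_le)
  hence k2: "k \<le> card U" using assms by linarith
  have "v j \<le> kth_smallest v U k \<longleftrightarrow> \<not> k \<le> card {l\<in>U. v l < v j}"
    using kth_less_iff[OF assms(1) assms(3) k2, of v "v j"] by linarith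
  also have "\<dots> \<longleftrightarrow> \<not> k \<le> card {l\<in>U - {j}. v l < v j}"
    using card_remove_less[OF assms(1,2)] by simp
  also have "\<dots> \<longleftrightarrow> v j \<le> kth_smallest v (U - {j}) k"
    using kth_less_iff[of "U - {j}" k v "v j"] assms by force
  finally show ?thesis .
qed

lemma card_split_le:
  fixes v :: "nat \<Rightarrow> real"
  assumes "finite U" "j \<in> U"
  shows "card {l\<in>U. v l \<le> t} = card {l\<in>U - {j}. v l \<le> t} + (if v j \<le> t then 1 else 0)"
proof -
  have fin: "finite {l\<in>U - {j}. v l \<le> t}" using assms by auto
  show ?thesis
  proof (cases "v j \<le> t")
    case True
    have "{l\<in>U. v l \<le> t} = insert j {l\<in>U - {j}. v l \<le> t}" using True assms by auto
    then show ?thesis using True fin by simp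
  next
    case False
    have "{l\<in>U. v l \<le> t} = {l\<in>U - {j}. v l \<le> t}" using False assms by auto
    then show ?thesis using False by simp
  qed
qed

lemma real_eq_by_less:
  fixes x y :: real
  assumes "\<And>t. t < x \<longleftrightarrow> t < y"
  shows "x = y"
  using assms[of x] assms[of y] by linarith

lemma tau_eq:
  fixes v :: "nat \<Rightarrow> real"
  assumes "finite U" "j \<in> U" "1 \<le> k" "k \<le> card (U - {j})"
    and sel: "v j \<le> kth_smallest v (U - {j}) k"
  shows "kth_smallest v U (k + 1) = kth_smallest v (U - {j}) k"
proof (rule real_eq_by_less)
  fix t
  have "card U > 0" using assms card_gt_0_iff by blast
  hence cU: "card U = card (U - {j}) + 1" using assms by (simp add: card_Diff_singleton)
  have fU': "finite (U - {j})" using assms by auto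
  have k1: "1 \<le> k + 1" "k + 1 \<le> card U" using assms(4) cU by linarith+
  have A: "t < kth_smallest v U (k + 1) \<longleftrightarrow> card {l\<in>U. v l \<le> t} < k + 1"
    by (rule kth_gt_iff[OF assms(1) k1])
  have B: "t < kth_smallest v (U - {j}) k \<longleftrightarrow> card {l\<in>U - {j}. v l \<le> t} < k"
    by (rule kth_gt_iff[OF fU' assms(3,4)])
  show "t < kth_smallest v U (k + 1) \<longleftrightarrow> t < kth_smallest v (U - {j}) k"
  proof (cases "v j \<le> t")
    case True
    then show ?thesis using A B card_split_le[OF assms(1,2), of v t] by auto
  next
    case False
    then have "t < kth_smallest v (U - {j}) k" using sel by linarith
    then show ?thesis using A B card_split_le[OF assms(1,2), of v t] False by auto
  qed
qed

lemma conf_quantile_cong: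
  assumes "\<And>s. s \<in> S \<Longrightarrow> v s = w s"
  shows "conf_quantile a v S = conf_quantile a w S"
proof -
  have "\<And>r. kth_smallest v S r = kth_smallest w S r" by (rule kth_cong) (rule assms)
  then show ?thesis unfolding conf_quantile_def Let_def by simp
qed

lemma miss_iff_kth:
  assumes "finite A" "l \<in> A" "k = nat \<lceil>(1 - a) * real (card A)\<rceil>" "k \<le> card A - 1" "1 \<le> k"
  shows "ereal (R l) > conf_quantile a R (A - {l}) \<longleftrightarrow> kth_smallest R A k < R l"
proof -
  have cA: "card (A - {l}) = card A - 1" using assms by simp
  have "card A > 0" using assms card_gt_0_iff by blast
  hence cA1: "real (card A - 1) + 1 = real (card A)" by simp
  have q: "conf_quantile a R (A - {l}) = ereal (kth_smallest R (A - {l}) k)"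
    unfolding conf_quantile_def Let_def cA cA1 using assms(3,4) by (simp add: assms(3)[symmetric])
  have "kth_smallest R (A - {l}) k < R l \<longleftrightarrow> k \<le> card {i\<in>A - {l}. R i < R l}"
    by (rule kth_less_iff) (use assms cA in auto)
  also have "\<dots> \<longleftrightarrow> k \<le> card {i\<in>A. R i < R l}"
    using card_remove_less[OF assms(1,2), of R] by simp
  also have "\<dots> \<longleftrightarrow> kth_smallest R A k < R l"
    by (rule kth_less_iff[symmetric]) (use assms in auto)
  finally show ?thesis using q by simp
qed

lemma count_miss:
  fixes R :: "nat \<Rightarrow> real"
  assumes "finite A" "0 < a" "a < 1"
  defines "N \<equiv> card {l\<in>A. ereal (R l) > conf_quantile a R (A - {l})}"
  shows "real N \<le> a * real (card A)"
    and "inj_on R A \<Longrightarrow> a * real (card A) - 1 \<le> real N"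
proof -
  define k where "k = nat \<lceil>(1 - a) * real (card A)\<rceil>"
  have kge: "real k \<ge> (1 - a) * real (card A)" unfolding k_def by linarith
  have kle: "real k < (1 - a) * real (card A) + 1"
  proof -
    have "0 \<le> (1 - a) * real (card A)" using assms(3) by simp
    hence "0 \<le> \<lceil>(1 - a) * real (card A)\<rceil>" by linarith
    hence "real (nat \<lceil>(1 - a) * real (card A)\<rceil>) = of_int \<lceil>(1 - a) * real (card A)\<rceil>" by simp
    hence "real k = of_int \<lceil>(1 - a) * real (card A)\<rceil>" using k_def by simp
    thus ?thesis by linarith
  qed
  have "real N \<le> a * real (card A) \<and> (inj_on R A \<longrightarrow> a * real (card A) - 1 \<le> real N)"
  proof (cases "A = {}")
    case True then show ?thesis unfolding N_def by simp
  next
    case ne: False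
    have cpos: "card A \<ge> 1" using ne assms(1) by (simp add: Suc_leI card_gt_0_iff)
    have "0 < (1 - a) * real (card A)" using cpos assms(3) by simp
    hence k1: "1 \<le> k" unfolding k_def by linarith
    show ?thesis
    proof (cases "k \<le> card A - 1")
      case False
      have "\<And>l. l \<in> A \<Longrightarrow> conf_quantile a R (A - {l}) = \<infinity>"
      proof -
        fix l assume l: "l \<in> A"
        have cA: "card (A - {l}) = card A - 1" using assms l by simp
        have cA1: "real (card A - 1) + 1 = real (card A)" using cpos by simp
        show "conf_quantile a R (A - {l}) = \<infinity>"
          unfolding conf_quantile_def Let_def cA cA1 using False by (simp add: k_def[symmetric])
      qed
      hence "{l\<in>A. ereal (R l) > conf_quantile a R (A - {l})} = {}" by auto
      hence "N = 0" unfolding N_def by (simp only: card.empty)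
      moreover have "a * real (card A) < 1"
      proof -
        have "real k \<ge> real (card A)" using False cpos by linarith
        thus ?thesis using kle by (simp add: algebra_simps)
      qed
      ultimately show ?thesis using assms(2) by simp
    next
      case True
      have set: "{l\<in>A. ereal (R l) > conf_quantile a R (A - {l})} = {l\<in>A. kth_smallest R A k < R l}"
        using miss_iff_kth[OF assms(1) _ k_def True k1] by auto
      have kA: "k \<le> card A" using True by linarith
      have split: "card {l\<in>A. kth_smallest R A k < R l} + card {l\<in>A. R l \<le> kth_smallest R A k} = card A"
      proof -
        have "{l\<in>A. kth_smallest R A k < R l} \<union> {l\<in>A. R l \<le> kth_smallest R A k} = A" by auto
        moreover have "{l\<in>A. kth_smallest R A k < R l} \<inter> {l\<in>A. R l \<le> kth_smallest R A k} = {}" by auto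
        ultimately show ?thesis using assms(1)
          card_Un_disjoint[of "{l\<in>A. kth_smallest R A k < R l}" "{l\<in>A. R l \<le> kth_smallest R A k}"] by simp
      qed
      have ge: "k \<le> card {l\<in>A. R l \<le> kth_smallest R A k}"
        by (rule card_le_kth_ge) (use assms k1 kA in auto)
      have up: "real N \<le> real (card A) - real k"
        unfolding N_def set using split ge by linarith
      have "real N \<le> a * real (card A)" using up kge by (simp add: algebra_simps)
      moreover have "inj_on R A \<longrightarrow> a * real (card A) - 1 \<le> real N"
      proof
        assume inj: "inj_on R A"
        have "card {l\<in>A. R l \<le> kth_smallest R A k} = k"
          by (rule card_le_kth_eq) (use assms k1 kA inj in auto)
        hence "N + k = card A" unfolding N_def set using split by simp
        hence "real N = real (card A) - real k" by (simp add: of_nat_add[symmetric] del: of_nat_add)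
        thus "a * real (card A) - 1 \<le> real N" using kle by (simp add: algebra_simps)
      qed
      ultimately show ?thesis by blast
    qed
  qed
  then show "real N \<le> a * real (card A)" and "inj_on R A \<Longrightarrow> a * real (card A) - 1 \<le> real N" by auto
qed

lemma fst_borel: "(fst :: real \<times> real \<Rightarrow> real) \<in> borel_measurable borel"
  by (intro borel_measurable_continuous_onI continuous_intros)
lemma snd_borel: "(snd :: real \<times> real \<Rightarrow> real) \<in> borel_measurable borel"
  by (intro borel_measurable_continuous_onI continuous_intros)

lemma card_meas:
  assumes "finite S" "\<And>j. j \<in> S \<Longrightarrow> {w\<in>space M. P j w} \<in> sets M"
  shows "(\<lambda>w. real (card {j\<in>S. P j w})) \<in> borel_measurable M"
proof -
  have eq: "real (card {j\<in>S. P j w}) = (\<Sum>j\<in>S. indicator {w\<in>space M. P j w} w)" if "w \<in> space M" for w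
  proof -
    have "real (card {j\<in>S. P j w}) = (\<Sum>j\<in>{j\<in>S. P j w}. 1)" by simp
    also have "\<dots> = (\<Sum>j\<in>S. if P j w then 1 else 0)" using sum.inter_filter[OF assms(1), of "\<lambda>_. 1::real" "\<lambda>j. P j w"] by simp
    also have "\<dots> = (\<Sum>j\<in>S. indicator {w\<in>space M. P j w} w)" using that by (intro sum.cong) (auto simp: indicator_def)
    finally show ?thesis .
  qed
  have "(\<lambda>w. \<Sum>j\<in>S. indicator {w\<in>space M. P j w} w :: real) \<in> borel_measurable M"
    using assms(2) by (intro borel_measurable_sum) (auto intro: borel_measurable_indicator)
  then show ?thesis by (rule measurable_cong[THEN iffD1, rotated]) (simp add: eq)
qed

lemma kth_meas_fixed:
  assumes fin: "finite S" and f: "\<And>i. i \<in> S \<Longrightarrow> (\<lambda>w. f w i) \<in> borel_measurable M"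
  shows "(\<lambda>w. kth_smallest (f w) S r) \<in> borel_measurable M"
proof (cases "1 \<le> r \<and> r \<le> card S")
  case True
  show ?thesis
  proof (subst borel_measurable_iff_le, intro allI)
    fix t
    have "{w \<in> space M. kth_smallest (f w) S r \<le> t} = {w\<in>space M. real r \<le> real (card {l\<in>S. f w l \<le> t})}"
      using kth_gt_iff[OF fin, of r t] True by (auto simp: not_less[symmetric])
    moreover have "(\<lambda>w. real (card {l\<in>S. f w l \<le> t})) \<in> borel_measurable M"
      by (rule card_meas[OF fin]) (use f in measurable)
    moreover have "{w\<in>space M. real r \<le> real (card {l\<in>S. f w l \<le> t})} \<in> sets M"
      by (rule borel_measurable_le) (auto intro: calculation)
    ultimately show "{w \<in> space M. kth_smallest (f w) S r \<le> t} \<in> sets M" by simp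
  qed
next
  case False
  show ?thesis
  proof (cases "r = 0")
    case True
    have "(\<lambda>w. kth_smallest (f w) S r) = (\<lambda>w. kth_smallest (f w) S 1)"
      using True by (simp add: kth_smallest_def)
    moreover have "(\<lambda>w. kth_smallest (f w) S 1) \<in> borel_measurable M"
    proof (cases "card S \<ge> 1")
      case True
      show ?thesis
      proof (subst borel_measurable_iff_le, intro allI)
        fix t
        have "{w \<in> space M. kth_smallest (f w) S 1 \<le> t} = {w\<in>space M. real 1 \<le> real (card {l\<in>S. f w l \<le> t})}"
          using kth_gt_iff[OF fin, of 1 t] True by (auto simp: not_less[symmetric])
        moreover have "(\<lambda>w. real (card {l\<in>S. f w l \<le> t})) \<in> borel_measurable M"
          by (rule card_meas[OF fin]) (use f in measurable)
        moreover have "{w\<in>space M. real 1 \<le> real (card {l\<in>S. f w l \<le> t})} \<in> sets M"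
          by (rule borel_measurable_le) (auto intro: calculation)
        ultimately show "{w \<in> space M. kth_smallest (f w) S 1 \<le> t} \<in> sets M" by simp
      qed
    next
      case False
      then have "(\<lambda>w. kth_smallest (f w) S 1) = (\<lambda>w. [] ! (1 - 1 - card S))"
        using kth_out_of_range[OF fin, of 1] by auto
      then show ?thesis by simp
    qed
    ultimately show ?thesis by simp
  next
    case False
    then have "card S < r" using \<open>\<not> (1 \<le> r \<and> r \<le> card S)\<close> by linarith
    then show ?thesis using kth_out_of_range[OF fin] by simp
  qed
qed

lemma kth_meas:
  assumes fin: "finite S" and f: "\<And>i. i \<in> S \<Longrightarrow> (\<lambda>w. f w i) \<in> borel_measurable M"
    and g: "g \<in> measurable M (count_space UNIV)"
  shows "(\<lambda>w. kth_smallest (f w) S (g w)) \<in> borel_measurable M"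
  using measurable_compose_countable[where f="\<lambda>r w. kth_smallest (f w) S r", OF kth_meas_fixed[OF fin f] g] .

lemma set_meas:
  assumes "finite C" "\<And>i. i \<in> C \<Longrightarrow> {w\<in>space M. P i w} \<in> sets M"
  shows "(\<lambda>w. {i\<in>C. P i w}) \<in> measurable M (count_space (Pow C))"
proof (subst measurable_count_space_eq_countable)
  show "countable (Pow C)" using assms(1) by (simp add: countable_finite)
  show "(\<lambda>w. {i \<in> C. P i w}) \<in> space M \<rightarrow> Pow C \<and> (\<forall>a\<in>Pow C. (\<lambda>w. {i \<in> C. P i w}) -` {a} \<inter> space M \<in> sets M)"
  proof (intro conjI ballI)
    show "(\<lambda>w. {i \<in> C. P i w}) \<in> space M \<rightarrow> Pow C" by auto
    fix a assume a: "a \<in> Pow C"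
    have "(\<lambda>w. {i \<in> C. P i w}) -` {a} \<inter> space M = {w\<in>space M. \<forall>i\<in>C. (P i w \<longleftrightarrow> i \<in> a)}"
      using a by auto
    also have "\<dots> \<in> sets M"
    proof (rule sets.sets_Collect_finite_All[OF _ assms(1)])
      fix i assume i: "i \<in> C"
      have "{w\<in>space M. (P i w \<longleftrightarrow> i \<in> a)} = (if i \<in> a then {w\<in>space M. P i w} else space M - {w\<in>space M. P i w})"
        by auto
      then show "{w\<in>space M. (P i w \<longleftrightarrow> i \<in> a)} \<in> sets M" using assms(2)[OF i] by auto
    qed
    finally show "(\<lambda>w. {i \<in> C. P i w}) -` {a} \<inter> space M \<in> sets M" .
  qed
qed

lemma cq_meas:
  assumes fin: "finite C" and f: "\<And>i. i \<in> C \<Longrightarrow> (\<lambda>w. f w i) \<in> borel_measurable M"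
    and B: "B \<in> measurable M (count_space (Pow C))"
  shows "(\<lambda>w. conf_quantile a (f w) (B w)) \<in> borel_measurable M"
proof (rule measurable_compose_countable'[where f="\<lambda>S w. conf_quantile a (f w) S", OF _ B])
  show "countable (Pow C)" using fin by (simp add: countable_finite)
  fix S assume S: "S \<in> Pow C"
  have finS: "finite S" using S fin finite_subset by auto
  have "(\<lambda>w. kth_smallest (f w) S (nat \<lceil>(1 - a) * (real (card S) + 1)\<rceil>)) \<in> borel_measurable M"
    by (rule kth_meas_fixed[OF finS]) (use f S in auto)
  then show "(\<lambda>w. conf_quantile a (f w) S) \<in> borel_measurable M"
    unfolding conf_quantile_def Let_def by measurable
qed

locale core =
  fixes D :: "(real \<times> real) measure" and C U :: "nat set" and n m :: nat
    and \<alpha> t_u :: real and \<kappa> :: "(nat \<Rightarrow> real) \<Rightarrow> nat" and F :: "real \<Rightarrow> real"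
  assumes D: "prob_space D" and sD: "sets D = sets borel"
    and finC: "finite C" and finU: "finite U" and disj: "C \<inter> U = {}"
    and cardC: "card C = n" and cardU: "card U = m" and m2: "m \<ge> 2"
    and alpha: "0 < \<alpha>" "\<alpha> < 1"
    and contT: "\<And>c. emeasure D {z\<in>space D. fst z = c} = 0"
    and contR: "\<And>c. emeasure D {z\<in>space D. snd z = c} = 0"
    and Fdef: "\<And>t. F t = measure D {z\<in>space D. fst z \<le> t}"
    and kappa_meas: "\<kappa> \<in> measurable (Pi\<^sub>M U (\<lambda>_. borel)) (count_space UNIV)"
    and kappa_range: "\<And>v. v \<in> space (Pi\<^sub>M U (\<lambda>_. borel)) \<Longrightarrow> \<kappa> v \<in> {1..m}"
begin

lemma spaceD: "space D = UNIV"
  using sets_eq_imp_space_eq[OF sD] by simp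

sublocale PD: product_prob_space "\<lambda>_::nat. D"
  using D by (simp add: product_prob_space_def product_sigma_finite_def prob_space_imp_sigma_finite
     product_prob_space_axioms_def)

lemma fstD[measurable]: "fst \<in> borel_measurable D"
  using fst_borel measurable_cong_sets[OF sD refl] by blast
lemma sndD[measurable]: "snd \<in> borel_measurable D"
  using snd_borel measurable_cong_sets[OF sD refl] by blast

lemma measD_borel: "f \<in> borel_measurable D \<longleftrightarrow> f \<in> borel_measurable borel"
  using measurable_cong_sets[OF sD refl] by blast

lemma comp_fst[measurable]: "i \<in> K \<Longrightarrow> (\<lambda>w. fst (w i)) \<in> borel_measurable (Pi\<^sub>M K (\<lambda>_. D))"
  by measurable
lemma comp_snd[measurable]: "i \<in> K \<Longrightarrow> (\<lambda>w. snd (w i)) \<in> borel_measurable (Pi\<^sub>M K (\<lambda>_. D))"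
  by measurable

lemma ties_null:
  fixes \<phi> :: "real \<times> real \<Rightarrow> real" and K :: "nat set"
  assumes K: "finite K" "a \<in> K" "b \<in> K" "a \<noteq> b"
    and phi: "\<phi> \<in> borel_measurable D" and cont: "\<And>c. emeasure D {z\<in>space D. \<phi> z = c} = 0"
  shows "AE w in Pi\<^sub>M K (\<lambda>_. D). \<phi> (w a) \<noteq> \<phi> (w b)"
proof -
  note phi[measurable]
  have [measurable]: "(\<lambda>w. \<phi> (w a)) \<in> borel_measurable (Pi\<^sub>M K (\<lambda>_. D))"
    "(\<lambda>w. \<phi> (w b)) \<in> borel_measurable (Pi\<^sub>M K (\<lambda>_. D))"
    using K by measurable
  let ?K' = "K - {a}"
  have Keq: "K = insert a ?K'" using K by auto
  let ?N = "{w\<in>space (Pi\<^sub>M K (\<lambda>_. D)). \<phi> (w a) = \<phi> (w b)}"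
  have Nm: "?N \<in> sets (Pi\<^sub>M K (\<lambda>_. D))" using K phi by measurable
  have "emeasure (Pi\<^sub>M K (\<lambda>_. D)) ?N = (\<integral>\<^sup>+w. indicator ?N w \<partial>Pi\<^sub>M K (\<lambda>_. D))"
    using Nm by simp
  also have "\<dots> = (\<integral>\<^sup>+w. indicator {w\<in>space (Pi\<^sub>M (insert a ?K') (\<lambda>_. D)). \<phi> (w a) = \<phi> (w b)} w \<partial>Pi\<^sub>M (insert a ?K') (\<lambda>_. D))"
    using Keq by simp
  also have "\<dots> = (\<integral>\<^sup>+ x. (\<integral>\<^sup>+ y. indicator {w\<in>space (Pi\<^sub>M (insert a ?K') (\<lambda>_. D)). \<phi> (w a) = \<phi> (w b)} (x(a := y)) \<partial>D) \<partial>Pi\<^sub>M ?K' (\<lambda>_. D))"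
  proof (rule PD.product_nn_integral_insert)
    show "finite ?K'" using K by simp
    show "a \<notin> ?K'" by simp
    show "indicator {w\<in>space (Pi\<^sub>M (insert a ?K') (\<lambda>_. D)). \<phi> (w a) = \<phi> (w b)} \<in> borel_measurable (Pi\<^sub>M (insert a ?K') (\<lambda>_. D))"
      unfolding Keq[symmetric] by measurable
  qed
  also have "\<dots> = (\<integral>\<^sup>+ x. 0 \<partial>Pi\<^sub>M ?K' (\<lambda>_. D))"
  proof (rule nn_integral_cong)
    fix x assume x: "x \<in> space (Pi\<^sub>M ?K' (\<lambda>_. D))"
    have "(\<integral>\<^sup>+ y. indicator {w\<in>space (Pi\<^sub>M (insert a ?K') (\<lambda>_. D)). \<phi> (w a) = \<phi> (w b)} (x(a := y)) \<partial>D)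
        = (\<integral>\<^sup>+ y. indicator {z\<in>space D. \<phi> z = \<phi> (x b)} y \<partial>D)"
    proof (rule nn_integral_cong)
      fix y assume y: "y \<in> space D"
      have "x(a := y) \<in> space (Pi\<^sub>M (insert a ?K') (\<lambda>_. D))"
        using x y by (auto simp: space_PiM PiE_iff spaceD extensional_def)
      then show "indicator {w\<in>space (Pi\<^sub>M (insert a ?K') (\<lambda>_. D)). \<phi> (w a) = \<phi> (w b)} (x(a := y))
          = indicator {z\<in>space D. \<phi> z = \<phi> (x b)} y"
        using K y by (auto simp: indicator_def)
    qed
    also have "\<dots> = 0"
      using cont[of "\<phi> (x b)"] phi by (subst nn_integral_indicator) auto
    finally show "(\<integral>\<^sup>+ y. indicator {w\<in>space (Pi\<^sub>M (insert a ?K') (\<lambda>_. D)). \<phi> (w a) = \<phi> (w b)} (x(a := y)) \<partial>D) = 0" .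
  qed
  also have "\<dots> = 0" by simp
  finally have "emeasure (Pi\<^sub>M K (\<lambda>_. D)) ?N = 0" .
  then show ?thesis
    by (subst AE_iff_measurable[OF Nm]) auto
qed

lemma inj_AE:
  fixes \<phi> :: "real \<times> real \<Rightarrow> real" and K :: "nat set"
  assumes K: "finite K" "S \<subseteq> K"
    and phi: "\<phi> \<in> borel_measurable D" and cont: "\<And>c. emeasure D {z\<in>space D. \<phi> z = c} = 0"
  shows "AE w in Pi\<^sub>M K (\<lambda>_. D). inj_on (\<lambda>i. \<phi> (w i)) S"
proof -
  have "AE w in Pi\<^sub>M K (\<lambda>_. D). \<forall>p\<in>S \<times> S. fst p \<noteq> snd p \<longrightarrow> \<phi> (w (fst p)) \<noteq> \<phi> (w (snd p))"
  proof (rule AE_finite_allI)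
    show "finite (S \<times> S)" using K finite_subset by blast
    fix p assume p: "p \<in> S \<times> S"
    show "AE w in Pi\<^sub>M K (\<lambda>_. D). fst p \<noteq> snd p \<longrightarrow> \<phi> (w (fst p)) \<noteq> \<phi> (w (snd p))"
    proof (cases "fst p = snd p")
      case True then show ?thesis by simp
    next
      case False
      have "fst p \<in> K" "snd p \<in> K" using p K by auto
      from ties_null[OF K(1) this False phi cont] show ?thesis by eventually_elim simp
    qed
  qed
  then show ?thesis
    by eventually_elim (auto simp: inj_on_def)
qed

end

lemma conf_quantile_reindex:
  assumes "inj_on s S"
  shows "conf_quantile a (v \<circ> s) S = conf_quantile a v (s ` S)"
  unfolding conf_quantile_def Let_def using kth_reindex[OF assms] card_image[OF assms] by simp

context core begin

declare comp_fst[measurable del] comp_snd[measurable del]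

definition miss :: "nat set \<Rightarrow> real \<Rightarrow> (nat \<Rightarrow> real \<times> real) \<Rightarrow> nat \<Rightarrow> bool" where
  "miss K \<tau> y l \<longleftrightarrow> fst (y l) \<le> \<tau> \<and>
     conf_quantile \<alpha> (\<lambda>i. snd (y i)) {i\<in>K - {l}. fst (y i) \<le> \<tau>} < ereal (snd (y l))"

lemma miss_sets:
  assumes K: "finite K" "l \<in> K"
  shows "{y\<in>space (Pi\<^sub>M K (\<lambda>_. D)). miss K \<tau> y l} \<in> sets (Pi\<^sub>M K (\<lambda>_. D))"
proof -
  have B: "(\<lambda>y. {i\<in>K - {l}. fst (y i) \<le> \<tau>}) \<in> measurable (Pi\<^sub>M K (\<lambda>_. D)) (count_space (Pow (K - {l})))"
  proof (rule set_meas)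
    show "finite (K - {l})" using K by simp
    fix i assume "i \<in> K - {l}"
    then have "(\<lambda>y. fst (y i)) \<in> borel_measurable (Pi\<^sub>M K (\<lambda>_. D))" by (intro comp_fst) auto
    then show "{y\<in>space (Pi\<^sub>M K (\<lambda>_. D)). fst (y i) \<le> \<tau>} \<in> sets (Pi\<^sub>M K (\<lambda>_. D))"
      by (intro borel_measurable_le measurable_const) simp_all
  qed
  have q[measurable]: "(\<lambda>y. conf_quantile \<alpha> (\<lambda>i. snd (y i)) {i\<in>K - {l}. fst (y i) \<le> \<tau>}) \<in> borel_measurable (Pi\<^sub>M K (\<lambda>_. D))"
  proof (rule cq_meas[OF _ _ B])
    show "finite (K - {l})" using K by simp
    fix i assume "i \<in> K - {l}"
    then show "(\<lambda>y. snd (y i)) \<in> borel_measurable (Pi\<^sub>M K (\<lambda>_. D))" by (intro comp_snd) auto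
  qed
  have [measurable]: "(\<lambda>y. fst (y l)) \<in> borel_measurable (Pi\<^sub>M K (\<lambda>_. D))"
     "(\<lambda>y. snd (y l)) \<in> borel_measurable (Pi\<^sub>M K (\<lambda>_. D))" using K by (intro comp_fst comp_snd; simp)+
  show ?thesis unfolding miss_def by measurable
qed

lemma prob_PK: "finite K \<Longrightarrow> prob_space (Pi\<^sub>M K (\<lambda>_. D))"
  using D by (intro prob_space_PiM) auto

lemma comp_measure:
  assumes K: "finite K" "j \<in> K" and A: "A \<in> sets borel"
  shows "measure (Pi\<^sub>M K (\<lambda>_. D)) {y\<in>space (Pi\<^sub>M K (\<lambda>_. D)). y j \<in> A} = measure D A"
proof -
  have d: "distr (Pi\<^sub>M K (\<lambda>_. D)) D (\<lambda>\<omega>. \<omega> j) = D"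
    using distr_PiM_component[of K "\<lambda>_. D" j] D K by auto
  have AD: "A \<in> sets D" using A sD by simp
  have m: "(\<lambda>\<omega>. \<omega> j) \<in> measurable (Pi\<^sub>M K (\<lambda>_. D)) D"
    using K(2) by (rule measurable_component_singleton)
  have "measure (distr (Pi\<^sub>M K (\<lambda>_. D)) D (\<lambda>\<omega>. \<omega> j)) A = measure (Pi\<^sub>M K (\<lambda>_. D)) ((\<lambda>\<omega>. \<omega> j) -` A \<inter> space (Pi\<^sub>M K (\<lambda>_. D)))"
    by (rule measure_distr[OF m AD])
  moreover have "(\<lambda>\<omega>. \<omega> j) -` A \<inter> space (Pi\<^sub>M K (\<lambda>_. D)) = {y\<in>space (Pi\<^sub>M K (\<lambda>_. D)). y j \<in> A}" by auto
  ultimately show ?thesis using d by simp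
qed

lemma innerF:
  assumes K: "finite K" "j \<in> K"
  shows "measure (Pi\<^sub>M K (\<lambda>_. D)) {y\<in>space (Pi\<^sub>M K (\<lambda>_. D)). fst (y j) \<le> \<tau>} = F \<tau>"
proof -
  have eq: "{y\<in>space (Pi\<^sub>M K (\<lambda>_. D)). fst (y j) \<le> \<tau>} = {y\<in>space (Pi\<^sub>M K (\<lambda>_. D)). y j \<in> {z. fst z \<le> \<tau>}}" by auto
  have Ab: "{z::real\<times>real. fst z \<le> \<tau>} \<in> sets borel"
  proof -
    have "{z\<in>space borel. fst z \<le> \<tau>} \<in> sets (borel :: (real \<times> real) measure)"
      by (rule borel_measurable_le[OF fst_borel measurable_const]) simp
    then show ?thesis by simp
  qed
  have "measure (Pi\<^sub>M K (\<lambda>_. D)) {y\<in>space (Pi\<^sub>M K (\<lambda>_. D)). y j \<in> {z. fst z \<le> \<tau>}} = measure D {z. fst z \<le> \<tau>}"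
    by (rule comp_measure[OF K Ab])
  moreover have "F \<tau> = measure D {z. fst z \<le> \<tau>}" using Fdef[of \<tau>] spaceD by simp
  ultimately show ?thesis unfolding eq by (simp only:)
qed


lemma G_sets:
  assumes K: "finite K" "l \<in> K"
  shows "{y\<in>space (Pi\<^sub>M K (\<lambda>_. D)). fst (y l) \<le> \<tau>} \<in> sets (Pi\<^sub>M K (\<lambda>_. D))"
proof -
  have "(\<lambda>y. fst (y l)) \<in> borel_measurable (Pi\<^sub>M K (\<lambda>_. D))" using K by (intro comp_fst) auto
  then show ?thesis by (intro borel_measurable_le measurable_const) simp_all
qed

lemma miss_swap:
  assumes K: "finite K" "j \<in> K" "l \<in> K"
  shows "measure (Pi\<^sub>M K (\<lambda>_. D)) {y\<in>space (Pi\<^sub>M K (\<lambda>_. D)). miss K \<tau> y j}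
       = measure (Pi\<^sub>M K (\<lambda>_. D)) {y\<in>space (Pi\<^sub>M K (\<lambda>_. D)). miss K \<tau> y l}"
proof -
  let ?P = "Pi\<^sub>M K (\<lambda>_. D)"
  define \<sigma> where "\<sigma> i = (if i = j then l else if i = l then j else i)" for i
  have inj: "inj_on \<sigma> X" for X by (auto simp: \<sigma>_def inj_on_def split: if_splits)
  have fnK: "\<sigma> \<in> K \<rightarrow> K" using K by (auto simp: \<sigma>_def)
  define r where "r y = (\<lambda>n\<in>K. y (\<sigma> n))" for y :: "nat \<Rightarrow> real \<times> real"
  have d: "distr ?P ?P r = ?P"
    using distr_PiM_reindex[of K "\<lambda>_. D" \<sigma> K, OF _ inj fnK] D unfolding r_def by simp
  have rm: "r \<in> measurable ?P ?P"
    unfolding r_def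
  proof (rule measurable_restrict)
    fix i assume "i \<in> K"
    then have "\<sigma> i \<in> K" using fnK by auto
    then show "(\<lambda>y. y (\<sigma> i)) \<in> measurable ?P D" by (rule measurable_component_singleton)
  qed
  have Ej: "{y\<in>space ?P. miss K \<tau> y j} \<in> sets ?P" by (rule miss_sets) (use K in auto)
  have "measure ?P {y\<in>space ?P. miss K \<tau> y j} = measure (distr ?P ?P r) {y\<in>space ?P. miss K \<tau> y j}"
    using d by simp
  also have "\<dots> = measure ?P (r -` {y\<in>space ?P. miss K \<tau> y j} \<inter> space ?P)"
    by (rule measure_distr[OF rm]) (use Ej in simp)
  also have "r -` {y\<in>space ?P. miss K \<tau> y j} \<inter> space ?P = {y\<in>space ?P. miss K \<tau> y l}"
  proof (intro set_eqI iffI)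
    fix y assume "y \<in> r -` {y\<in>space ?P. miss K \<tau> y j} \<inter> space ?P"
    then have y: "y \<in> space ?P" and mj: "miss K \<tau> (r y) j" by auto
    have "miss K \<tau> (r y) j \<longleftrightarrow> miss K \<tau> y l"
    proof -
      let ?S' = "{i\<in>K - {j}. fst (r y i) \<le> \<tau>}"
      have "conf_quantile \<alpha> (\<lambda>i. snd (r y i)) ?S' = conf_quantile \<alpha> ((\<lambda>i. snd (y i)) \<circ> \<sigma>) ?S'"
        by (rule conf_quantile_cong) (auto simp: r_def)
      also have "\<dots> = conf_quantile \<alpha> (\<lambda>i. snd (y i)) (\<sigma> ` ?S')"
        by (rule conf_quantile_reindex[OF inj])
      also have "\<sigma> ` ?S' = {i\<in>K - {l}. fst (y i) \<le> \<tau>}"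
      proof (intro set_eqI iffI)
        fix x assume "x \<in> \<sigma> ` ?S'"
        then obtain i where i: "i \<in> K" "i \<noteq> j" "fst (y (\<sigma> i)) \<le> \<tau>" "x = \<sigma> i" by (auto simp: r_def)
        then show "x \<in> {i\<in>K - {l}. fst (y i) \<le> \<tau>}" using K by (auto simp: \<sigma>_def split: if_splits)
      next
        fix x assume x: "x \<in> {i\<in>K - {l}. fst (y i) \<le> \<tau>}"
        have "\<sigma> (\<sigma> x) = x" by (auto simp: \<sigma>_def)
        moreover have "\<sigma> x \<in> ?S'" using x K by (auto simp: \<sigma>_def r_def)
        ultimately show "x \<in> \<sigma> ` ?S'" by (metis image_eqI)
      qed
      finally have q: "conf_quantile \<alpha> (\<lambda>i. snd (r y i)) ?S' = conf_quantile \<alpha> (\<lambda>i. snd (y i)) {i\<in>K - {l}. fst (y i) \<le> \<tau>}" .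
      have "r y j = y l" using K by (simp add: r_def \<sigma>_def)
      then show ?thesis unfolding miss_def using q by simp
    qed
    then show "y \<in> {y\<in>space ?P. miss K \<tau> y l}" using y mj by auto
  next
    fix y assume "y \<in> {y\<in>space ?P. miss K \<tau> y l}"
    then have y: "y \<in> space ?P" and ml: "miss K \<tau> y l" by auto
    have ry: "r y \<in> space ?P" using rm y by (rule measurable_space)
    have "miss K \<tau> (r y) j \<longleftrightarrow> miss K \<tau> y l"
    proof -
      let ?S' = "{i\<in>K - {j}. fst (r y i) \<le> \<tau>}"
      have "conf_quantile \<alpha> (\<lambda>i. snd (r y i)) ?S' = conf_quantile \<alpha> ((\<lambda>i. snd (y i)) \<circ> \<sigma>) ?S'"
        by (rule conf_quantile_cong) (auto simp: r_def)
      also have "\<dots> = conf_quantile \<alpha> (\<lambda>i. snd (y i)) (\<sigma> ` ?S')"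
        by (rule conf_quantile_reindex[OF inj])
      also have "\<sigma> ` ?S' = {i\<in>K - {l}. fst (y i) \<le> \<tau>}"
      proof (intro set_eqI iffI)
        fix x assume "x \<in> \<sigma> ` ?S'"
        then obtain i where i: "i \<in> K" "i \<noteq> j" "fst (y (\<sigma> i)) \<le> \<tau>" "x = \<sigma> i" by (auto simp: r_def)
        then show "x \<in> {i\<in>K - {l}. fst (y i) \<le> \<tau>}" using K by (auto simp: \<sigma>_def split: if_splits)
      next
        fix x assume x: "x \<in> {i\<in>K - {l}. fst (y i) \<le> \<tau>}"
        have "\<sigma> (\<sigma> x) = x" by (auto simp: \<sigma>_def)
        moreover have "\<sigma> x \<in> ?S'" using x K by (auto simp: \<sigma>_def r_def)
        ultimately show "x \<in> \<sigma> ` ?S'" by (metis image_eqI)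
      qed
      finally have q: "conf_quantile \<alpha> (\<lambda>i. snd (r y i)) ?S' = conf_quantile \<alpha> (\<lambda>i. snd (y i)) {i\<in>K - {l}. fst (y i) \<le> \<tau>}" .
      have "r y j = y l" using K by (simp add: r_def \<sigma>_def)
      then show ?thesis unfolding miss_def using q by simp
    qed
    then show "y \<in> r -` {y\<in>space ?P. miss K \<tau> y j} \<inter> space ?P" using y ry ml by auto
  qed
  finally show ?thesis .
qed

end

context core begin

lemma sum_ind_card:
  assumes "finite K" "y \<in> space M"
  shows "(\<Sum>l\<in>K. indicator {y\<in>space M. Q l y} y) = real (card {l\<in>K. Q l y})"
proof -
  have "(\<Sum>l\<in>K. indicator {y\<in>space M. Q l y} y) = (\<Sum>l\<in>K. if Q l y then 1 else 0 :: real)"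
    using assms(2) by (intro sum.cong) (auto simp: indicator_def)
  also have "\<dots> = (\<Sum>l\<in>{l\<in>K. Q l y}. 1)"
    using sum.inter_filter[OF assms(1), of "\<lambda>_. 1::real" "\<lambda>l. Q l y"] by simp
  finally show ?thesis by simp
qed

lemma inner_bounds:
  assumes K: "finite K" "j \<in> K"
  shows "measure (Pi\<^sub>M K (\<lambda>_. D)) {y\<in>space (Pi\<^sub>M K (\<lambda>_. D)). miss K \<tau> y j} \<le> \<alpha> * F \<tau>"
    and "\<alpha> * F \<tau> \<le> measure (Pi\<^sub>M K (\<lambda>_. D)) {y\<in>space (Pi\<^sub>M K (\<lambda>_. D)). miss K \<tau> y j}
              + (if F \<tau> > 0 then 1 / real (card K) else 0)"
proof -
  let ?P = "Pi\<^sub>M K (\<lambda>_. D)"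
  interpret P: prob_space ?P using prob_PK[OF K(1)] .
  define E where "E l = {y\<in>space ?P. miss K \<tau> y l}" for l
  define G where "G l = {y\<in>space ?P. fst (y l) \<le> \<tau>}" for l
  have Es: "E l \<in> sets ?P" if "l \<in> K" for l unfolding E_def by (rule miss_sets) (use K that in auto)
  have Gs: "G l \<in> sets ?P" if "l \<in> K" for l unfolding G_def by (rule G_sets) (use K that in auto)
  have iE: "integrable ?P (indicator (E l) :: _ \<Rightarrow> real)" if "l \<in> K" for l
    by (rule integrable_real_indicator[OF Es[OF that]]) (simp add: P.emeasure_finite top.not_eq_extremum[symmetric])
  have iG: "integrable ?P (indicator (G l) :: _ \<Rightarrow> real)" if "l \<in> K" for l
    by (rule integrable_real_indicator[OF Gs[OF that]]) (simp add: P.emeasure_finite top.not_eq_extremum[symmetric])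
  have cK: "card K > 0" using K card_gt_0_iff by blast
  define A where "A y = {i\<in>K. fst (y i) \<le> \<tau>}" for y :: "nat \<Rightarrow> real \<times> real"
  have cnt: "{l\<in>K. miss K \<tau> y l} = {l\<in>A y. conf_quantile \<alpha> (\<lambda>i. snd (y i)) (A y - {l}) < ereal (snd (y l))}" for y
  proof -
    have "\<And>l. {i\<in>K - {l}. fst (y i) \<le> \<tau>} = A y - {l}" unfolding A_def by auto
    then show ?thesis unfolding miss_def A_def by auto
  qed
  have finA: "finite (A y)" for y unfolding A_def using K by simp
  have sumE: "(\<Sum>l\<in>K. indicator (E l) y) = real (card {l\<in>K. miss K \<tau> y l})" if "y \<in> space ?P" for y
    unfolding E_def by (rule sum_ind_card[OF K(1) that])
  have sumG: "(\<Sum>l\<in>K. indicator (G l) y) = real (card (A y))" if "y \<in> space ?P" for y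
    unfolding G_def A_def by (rule sum_ind_card[OF K(1) that])
  have intE: "integral\<^sup>L ?P (\<lambda>y. \<Sum>l\<in>K. indicator (E l) y) = real (card K) * measure ?P (E j)"
  proof -
    have "integral\<^sup>L ?P (\<lambda>y. \<Sum>l\<in>K. indicator (E l) y) = (\<Sum>l\<in>K. integral\<^sup>L ?P (indicator (E l)) :: real)"
      by (rule Bochner_Integration.integral_sum[where I=K and M="?P" and f="\<lambda>l. indicator (E l)"]) (erule iE)
    also have "\<dots> = (\<Sum>l\<in>K. measure ?P (E j))"
    proof (rule sum.cong[OF refl])
      fix l assume l: "l \<in> K"
      have "integral\<^sup>L ?P (indicator (E l)) = measure ?P (E l)"
        using Es[OF l] by (simp add: Int_absorb2 sets.sets_into_space)
      also have "\<dots> = measure ?P (E j)" unfolding E_def using miss_swap[OF K(1,2) l] by simp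
      finally show "integral\<^sup>L ?P (indicator (E l)) = measure ?P (E j)" .
    qed
    finally show ?thesis by simp
  qed
  have intG: "integral\<^sup>L ?P (\<lambda>y. \<Sum>l\<in>K. indicator (G l) y) = real (card K) * F \<tau>"
  proof -
    have "integral\<^sup>L ?P (\<lambda>y. \<Sum>l\<in>K. indicator (G l) y) = (\<Sum>l\<in>K. integral\<^sup>L ?P (indicator (G l)) :: real)"
      by (rule Bochner_Integration.integral_sum[where I=K and M="?P" and f="\<lambda>l. indicator (G l)"]) (erule iG)
    also have "\<dots> = (\<Sum>l\<in>K. F \<tau>)"
    proof (rule sum.cong[OF refl])
      fix l assume l: "l \<in> K"
      have "integral\<^sup>L ?P (indicator (G l)) = measure ?P (G l)"
        using Gs[OF l] by (simp add: Int_absorb2 sets.sets_into_space)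
      also have "\<dots> = F \<tau>" unfolding G_def using innerF[OF K(1) l] by simp
      finally show "integral\<^sup>L ?P (indicator (G l)) = F \<tau>" .
    qed
    finally show ?thesis by simp
  qed
  have intsE: "integrable ?P (\<lambda>y. \<Sum>l\<in>K. indicator (E l) y :: real)" using iE by auto
  have intsG: "integrable ?P (\<lambda>y. \<alpha> * (\<Sum>l\<in>K. indicator (G l) y :: real))" using iG by auto
  have "real (card K) * measure ?P (E j) \<le> integral\<^sup>L ?P (\<lambda>y. \<alpha> * (\<Sum>l\<in>K. indicator (G l) y))"
    unfolding intE[symmetric]
  proof (rule integral_mono[OF intsE intsG])
    fix y assume y: "y \<in> space ?P"
    show "(\<Sum>l\<in>K. indicator (E l) y) \<le> \<alpha> * (\<Sum>l\<in>K. indicator (G l) y)"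
      unfolding sumE[OF y] sumG[OF y] cnt using count_miss(1)[OF finA alpha] by simp
  qed
  also have "\<dots> = \<alpha> * (real (card K) * F \<tau>)" using intG by simp
  finally have "real (card K) * measure ?P (E j) \<le> real (card K) * (\<alpha> * F \<tau>)" by (simp add: algebra_simps)
  then show "measure ?P {y\<in>space ?P. miss K \<tau> y j} \<le> \<alpha> * F \<tau>"
    using cK unfolding E_def by simp
  define NE where "NE = (\<Union>l\<in>K. G l)"
  have NEs: "NE \<in> sets ?P" unfolding NE_def using Gs K by auto
  have injAE: "AE y in ?P. inj_on (\<lambda>i. snd (y i)) K"
    by (rule inj_AE[OF K(1) subset_refl sndD contR])
  have "real (card K) * (\<alpha> * F \<tau>) = integral\<^sup>L ?P (\<lambda>y. \<alpha> * (\<Sum>l\<in>K. indicator (G l) y))"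
    using intG by simp
  also have "\<dots> \<le> integral\<^sup>L ?P (\<lambda>y. (\<Sum>l\<in>K. indicator (E l) y) + indicator NE y)"
  proof (rule integral_mono_AE[OF intsG])
    show "integrable ?P (\<lambda>y. (\<Sum>l\<in>K. indicator (E l) y) + indicator NE y :: real)"
      by (rule Bochner_Integration.integrable_add[OF intsE integrable_real_indicator[OF NEs]]) (simp add: P.emeasure_finite top.not_eq_extremum[symmetric])
    show "AE y in ?P. \<alpha> * (\<Sum>l\<in>K. indicator (G l) y) \<le> (\<Sum>l\<in>K. indicator (E l) y) + indicator NE y"
      using injAE
    proof eventually_elim
      case (elim y)
      show ?case
      proof (cases "y \<in> space ?P")
        case y: True
        have inA: "inj_on (\<lambda>i. snd (y i)) (A y)" using elim inj_on_subset unfolding A_def by fastforce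
        show ?thesis
        proof (cases "A y = {}")
          case True
          then show ?thesis unfolding sumE[OF y] sumG[OF y] by (simp add: indicator_def)
        next
          case False
          then obtain l where l: "l \<in> K" "fst (y l) \<le> \<tau>" unfolding A_def by auto
          have "y \<in> NE" unfolding NE_def G_def using l y by auto
          then show ?thesis unfolding sumE[OF y] sumG[OF y] cnt
            using count_miss(2)[OF finA alpha inA] by simp
        qed
      next
        case False
        then show ?thesis by (simp add: E_def G_def NE_def indicator_def)
      qed
    qed
  qed
  also have "\<dots> = real (card K) * measure ?P (E j) + measure ?P NE"
  proof -
    have iNE: "integrable ?P (indicator NE :: _ \<Rightarrow> real)"
      by (rule integrable_real_indicator[OF NEs]) (simp add: P.emeasure_finite top.not_eq_extremum[symmetric])
    show ?thesis
      by (subst Bochner_Integration.integral_add[OF intsE iNE]) (use intE NEs in \<open>simp add: Int_absorb2 sets.sets_into_space\<close>)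
  qed
  finally have low: "real (card K) * (\<alpha> * F \<tau>) \<le> real (card K) * measure ?P (E j) + measure ?P NE" .
  have NEb: "measure ?P NE \<le> (if F \<tau> > 0 then 1 else 0)"
  proof (cases "F \<tau> > 0")
    case True then show ?thesis by simp
  next
    case False
    have "measure ?P NE \<le> (\<Sum>l\<in>K. measure ?P (G l))"
      unfolding NE_def by (rule P.finite_measure_subadditive_finite) (use K Gs in auto)
    also have "\<dots> = 0" using innerF[OF K(1)] by (simp add: G_def)
      (use False Fdef in \<open>metis measure_nonneg not_less order.antisym\<close>)
    finally show ?thesis using False by simp
  qed
  show "\<alpha> * F \<tau> \<le> measure ?P {y\<in>space ?P. miss K \<tau> y j} + (if F \<tau> > 0 then 1 / real (card K) else 0)"
  proof -
    have "real (card K) * (\<alpha> * F \<tau>) \<le> real (card K) * (measure ?P (E j) + (if F \<tau> > 0 then 1 / real (card K) else 0))"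
    proof (cases "F \<tau> > 0")
      case True
      then have "measure ?P NE \<le> 1" using NEb by simp
      then show ?thesis using low cK True by (simp add: algebra_simps; linarith)
    next
      case False
      then have "measure ?P NE \<le> 0" using NEb by simp
      have "F \<tau> = 0" using False Fdef[of \<tau>] measure_nonneg[of D] by (metis not_less order.antisym)
      then show ?thesis using alpha by simp
    qed
    then show ?thesis using cK unfolding E_def by simp
  qed
qed

end

context core begin

definition "II = C \<union> U"
abbreviation "PP \<equiv> Pi\<^sub>M II (\<lambda>_. D)"

definition Kj :: "nat \<Rightarrow> (nat \<Rightarrow> real \<times> real) \<Rightarrow> nat" where
  "Kj j w = \<kappa> (restrict ((\<lambda>i. fst (w i))(j := t_u)) U)"
definition k0 :: "(nat \<Rightarrow> real \<times> real) \<Rightarrow> nat" where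
  "k0 w = \<kappa> (restrict (\<lambda>i. fst (w i)) U)"
definition tau :: "nat \<Rightarrow> (nat \<Rightarrow> real \<times> real) \<Rightarrow> real" where
  "tau j w = kth_smallest (\<lambda>i. fst (w i)) (U - {j}) (Kj j w)"
definition hh :: "nat \<Rightarrow> (nat \<Rightarrow> real \<times> real) \<Rightarrow> real" where
  "hh j w = (if fst (w j) \<le> tau j w \<and>
       conf_quantile \<alpha> (\<lambda>i. snd (w i)) {i\<in>C. fst (w i) \<le> tau j w} < ereal (snd (w j)) then 1 else 0) / real (Kj j w)"
definition ll :: "nat \<Rightarrow> (nat \<Rightarrow> real \<times> real) \<Rightarrow> real" where
  "ll j w = (if fst (w j) \<le> tau j w then 1 / ((real n + 1) * F (tau j w)) else 0) / real (Kj j w)"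
definition ss :: "nat \<Rightarrow> (nat \<Rightarrow> real \<times> real) \<Rightarrow> real" where
  "ss j w = (if fst (w j) \<le> tau j w then 1 else 0) / real (Kj j w)"

definition FCRf :: "(nat \<Rightarrow> real \<times> real) \<Rightarrow> real" where
  "FCRf w = (let T = (\<lambda>i. fst (w i)); k = \<kappa> (restrict T U); Su = sel_test T U k;
                 Q = conf_quantile \<alpha> (\<lambda>i. snd (w i)) (sel_calib_plus T C U k)
             in real (card {j\<in>Su. Q < ereal (snd (w j))}) / real (max (card Su) 1))"
definition LBf :: "(nat \<Rightarrow> real \<times> real) \<Rightarrow> real" where
  "LBf w = 1 / ((real n + 1) * F (kth_smallest (\<lambda>i. fst (w i)) U (\<kappa> (restrict (\<lambda>i. fst (w i)) U) + 1)))"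

lemma UII: "U \<subseteq> II" and CII: "C \<subseteq> II" and finII: "finite II"
  unfolding II_def using finC finU by auto

lemma fstP: "i \<in> II \<Longrightarrow> (\<lambda>w. fst (w i)) \<in> borel_measurable PP" by (rule comp_fst)
lemma sndP: "i \<in> II \<Longrightarrow> (\<lambda>w. snd (w i)) \<in> borel_measurable PP" by (rule comp_snd)

lemma Kj_meas: "Kj j \<in> measurable PP (count_space UNIV)"
proof -
  have "(\<lambda>w. restrict ((\<lambda>i. fst (w i))(j := t_u)) U) \<in> measurable PP (Pi\<^sub>M U (\<lambda>_. borel))"
  proof (rule measurable_restrict)
    fix i assume i: "i \<in> U"
    show "(\<lambda>w. ((\<lambda>i. fst (w i))(j := t_u)) i) \<in> borel_measurable PP"
    proof (cases "i = j")
      case True then show ?thesis by simp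
    next
      case False then show ?thesis using fstP[of i] i UII by auto
    qed
  qed
  then show ?thesis unfolding Kj_def[abs_def] using kappa_meas by (rule measurable_compose)
qed

lemma k0_meas: "k0 \<in> measurable PP (count_space UNIV)"
proof -
  have "(\<lambda>w. restrict (\<lambda>i. fst (w i)) U) \<in> measurable PP (Pi\<^sub>M U (\<lambda>_. borel))"
  proof (rule measurable_restrict)
    fix i assume i: "i \<in> U"
    show "(\<lambda>w. fst (w i)) \<in> borel_measurable PP" using fstP[of i] i UII by auto
  qed
  then show ?thesis unfolding k0_def[abs_def] using kappa_meas by (rule measurable_compose)
qed

lemma real_nat_meas: "f \<in> measurable M (count_space UNIV) \<Longrightarrow> (\<lambda>w. real (f w)) \<in> borel_measurable M"
  by (erule measurable_compose) simp

lemma tau_meas: "tau j \<in> borel_measurable PP"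
  unfolding tau_def[abs_def]
  by (rule kth_meas[OF _ _ Kj_meas]) (use finU fstP UII in auto)

lemma fst_le_borel: "{z::real\<times>real. fst z \<le> t} \<in> sets borel"
proof -
  have "{z\<in>space borel. fst z \<le> t} \<in> sets (borel :: (real \<times> real) measure)"
    by (rule borel_measurable_le[OF fst_borel measurable_const]) simp
  then show ?thesis by simp
qed

lemma F_mono: "mono F"
proof (rule monoI)
  fix x y :: real assume "x \<le> y"
  then show "F x \<le> F y" unfolding Fdef
    using D by (intro PD.M.finite_measure_mono) (auto simp: sD spaceD fst_le_borel)
qed

lemma F_meas[measurable]: "F \<in> borel_measurable borel"
  by (rule borel_measurable_mono[OF F_mono])

lemma le_tau_sets: "j \<in> II \<Longrightarrow> {w\<in>space PP. fst (w j) \<le> tau j w} \<in> sets PP"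
  by (rule borel_measurable_le[OF fstP tau_meas])

lemma cq_tau_meas: "(\<lambda>w. conf_quantile \<alpha> (\<lambda>i. snd (w i)) {i\<in>C. fst (w i) \<le> tau j w}) \<in> borel_measurable PP"
proof (rule cq_meas[OF finC])
  show "\<And>i. i \<in> C \<Longrightarrow> (\<lambda>w. snd (w i)) \<in> borel_measurable PP" using sndP CII by auto
  show "(\<lambda>w. {i\<in>C. fst (w i) \<le> tau j w}) \<in> measurable PP (count_space (Pow C))"
    by (rule set_meas[OF finC]) (use fstP CII in \<open>auto intro!: borel_measurable_le tau_meas\<close>)
qed

lemma hh_meas: "j \<in> II \<Longrightarrow> hh j \<in> borel_measurable PP"
proof -
  assume j: "j \<in> II"
  have s1: "{w\<in>space PP. fst (w j) \<le> tau j w} \<in> sets PP" by (rule le_tau_sets[OF j])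
  have s2: "{w\<in>space PP. conf_quantile \<alpha> (\<lambda>i. snd (w i)) {i\<in>C. fst (w i) \<le> tau j w} < ereal (snd (w j))} \<in> sets PP"
    by (rule borel_measurable_less[OF cq_tau_meas]) (use sndP[OF j] in measurable)
  have "(\<lambda>w. (if fst (w j) \<le> tau j w \<and>
       conf_quantile \<alpha> (\<lambda>i. snd (w i)) {i\<in>C. fst (w i) \<le> tau j w} < ereal (snd (w j)) then 1 else 0) :: real) \<in> borel_measurable PP"
  proof -
    have [measurable]: "Measurable.pred PP (\<lambda>w. fst (w j) \<le> tau j w)"
      "Measurable.pred PP (\<lambda>w. conf_quantile \<alpha> (\<lambda>i. snd (w i)) {i\<in>C. fst (w i) \<le> tau j w} < ereal (snd (w j)))"
      unfolding pred_def using s1 s2 by simp_all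
    show ?thesis by measurable
  qed
  moreover have "(\<lambda>w. real (Kj j w)) \<in> borel_measurable PP" by (rule real_nat_meas[OF Kj_meas])
  ultimately show ?thesis unfolding hh_def[abs_def] by (rule borel_measurable_divide)
qed


lemma ll_meas: "j \<in> II \<Longrightarrow> ll j \<in> borel_measurable PP"
proof -
  assume j: "j \<in> II"
  have [measurable]: "Measurable.pred PP (\<lambda>w. fst (w j) \<le> tau j w)"
    unfolding pred_def using le_tau_sets[OF j] by simp
  have [measurable]: "tau j \<in> borel_measurable PP" by (rule tau_meas)
  have [measurable]: "(\<lambda>w. real (Kj j w)) \<in> borel_measurable PP" by (rule real_nat_meas[OF Kj_meas])
  show ?thesis unfolding ll_def[abs_def] by measurable
qed

lemma ss_meas: "j \<in> II \<Longrightarrow> ss j \<in> borel_measurable PP"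
proof -
  assume j: "j \<in> II"
  have [measurable]: "Measurable.pred PP (\<lambda>w. fst (w j) \<le> tau j w)"
    unfolding pred_def using le_tau_sets[OF j] by simp
  have [measurable]: "(\<lambda>w. real (Kj j w)) \<in> borel_measurable PP" by (rule real_nat_meas[OF Kj_meas])
  show ?thesis unfolding ss_def[abs_def] by measurable
qed

definition "kk w = kth_smallest (\<lambda>i. fst (w i)) U (k0 w)"
definition "kk1 w = kth_smallest (\<lambda>i. fst (w i)) U (k0 w + 1)"
definition "QQ w = conf_quantile \<alpha> (\<lambda>i. snd (w i)) {i\<in>C. fst (w i) \<le> kk1 w}"

lemma FCRf_eq: "FCRf w = real (card {j\<in>U. fst (w j) \<le> kk w \<and> QQ w < ereal (snd (w j))}) / max (real (card {j\<in>U. fst (w j) \<le> kk w})) 1"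
proof -
  have "{j \<in> sel_test (\<lambda>i. fst (w i)) U (k0 w). QQ w < ereal (snd (w j))} = {j\<in>U. fst (w j) \<le> kk w \<and> QQ w < ereal (snd (w j))}"
    unfolding sel_test_def kk_def by auto
  moreover have "sel_test (\<lambda>i. fst (w i)) U (k0 w) = {j\<in>U. fst (w j) \<le> kk w}"
    unfolding sel_test_def kk_def by auto
  moreover have "sel_calib_plus (\<lambda>i. fst (w i)) C U (k0 w) = {i\<in>C. fst (w i) \<le> kk1 w}"
    unfolding sel_calib_plus_def kk1_def by auto
  ultimately show ?thesis unfolding FCRf_def Let_def k0_def[symmetric] QQ_def
    by (simp add: of_nat_max)
qed

lemma kk_meas: "kk \<in> borel_measurable PP" and kk1_meas: "kk1 \<in> borel_measurable PP"
proof -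
  show "kk \<in> borel_measurable PP" unfolding kk_def[abs_def]
    by (rule kth_meas[OF _ _ k0_meas]) (use finU fstP UII in auto)
  have g: "(\<lambda>w. k0 w + 1) \<in> measurable PP (count_space UNIV)"
    using k0_meas by (rule measurable_compose) simp
  show "kk1 \<in> borel_measurable PP" unfolding kk1_def[abs_def]
    by (rule kth_meas[OF finU _ g]) (use fstP UII in auto)
qed

lemma QQ_meas: "QQ \<in> borel_measurable PP"
  unfolding QQ_def[abs_def]
proof (rule cq_meas[OF finC])
  show "\<And>i. i \<in> C \<Longrightarrow> (\<lambda>w. snd (w i)) \<in> borel_measurable PP" using sndP CII by auto
  show "(\<lambda>w. {i\<in>C. fst (w i) \<le> kk1 w}) \<in> measurable PP (count_space (Pow C))"
    by (rule set_meas[OF finC]) (use fstP CII in \<open>auto intro!: borel_measurable_le kk1_meas\<close>)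
qed

lemma FCRf_meas: "FCRf \<in> borel_measurable PP"
proof -
  have a: "(\<lambda>w. real (card {j\<in>U. fst (w j) \<le> kk w \<and> QQ w < ereal (snd (w j))})) \<in> borel_measurable PP"
  proof (rule card_meas[OF finU])
    fix j assume "j \<in> U"
    then have j: "j \<in> II" using UII by auto
    have s1: "{w\<in>space PP. fst (w j) \<le> kk w} \<in> sets PP" by (rule borel_measurable_le[OF fstP[OF j] kk_meas])
    have s2: "{w\<in>space PP. QQ w < ereal (snd (w j))} \<in> sets PP"
      by (rule borel_measurable_less[OF QQ_meas]) (use sndP[OF j] in measurable)
    have "{w\<in>space PP. fst (w j) \<le> kk w \<and> QQ w < ereal (snd (w j))} = {w\<in>space PP. fst (w j) \<le> kk w} \<inter> {w\<in>space PP. QQ w < ereal (snd (w j))}" by auto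
    then show "{w\<in>space PP. fst (w j) \<le> kk w \<and> QQ w < ereal (snd (w j))} \<in> sets PP" using s1 s2 by auto
  qed
  have b: "(\<lambda>w. real (card {j\<in>U. fst (w j) \<le> kk w})) \<in> borel_measurable PP"
  proof (rule card_meas[OF finU])
    fix j assume "j \<in> U"
    then have j: "j \<in> II" using UII by auto
    show "{w\<in>space PP. fst (w j) \<le> kk w} \<in> sets PP"
      by (rule borel_measurable_le[OF fstP[OF j] kk_meas])
  qed
  note a[measurable] b[measurable]
  show ?thesis unfolding FCRf_eq[abs_def] by measurable
qed

lemma LBf_eq: "LBf w = 1 / ((real n + 1) * F (kk1 w))"
  unfolding LBf_def kk1_def k0_def by simp

lemma LBf_meas: "LBf \<in> borel_measurable PP"
proof -
  note kk1_meas[measurable]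
  show ?thesis unfolding LBf_eq[abs_def] by measurable
qed

end

lemma sum_if_div:
  fixes c d :: real
  assumes "finite U"
  shows "(\<Sum>j\<in>U. (if P j then c else 0) / d) = real (card {j\<in>U. P j}) * c / d"
proof -
  have "(\<Sum>j\<in>U. (if P j then c else 0) / d) = (\<Sum>j\<in>U. (if P j then c else 0)) / d"
    by (simp add: sum_divide_distrib)
  also have "(\<Sum>j\<in>U. (if P j then c else 0)) = (\<Sum>j\<in>{j\<in>U. P j}. c)"
    using sum.inter_filter[OF assms, of "\<lambda>_. c" P] by simp
  finally show ?thesis by simp
qed

context core begin

lemma k0_range: "w \<in> space PP \<Longrightarrow> k0 w \<in> {1..m}"
  unfolding k0_def by (rule kappa_range) (simp add: space_PiM)

lemma pointwise:
  assumes w: "w \<in> space PP"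
    and K: "\<forall>j\<in>U. Kj j w = k0 w" and kle: "k0 w \<le> m - 1" and inj: "inj_on (\<lambda>i. fst (w i)) U"
  shows "FCRf w = (\<Sum>j\<in>U. hh j w)" "LBf w = (\<Sum>j\<in>U. ll j w)" "(\<Sum>j\<in>U. ss j w) = 1"
proof -
  define T where "T = (\<lambda>i. fst (w i))"
  define k where "k = k0 w"
  have k1: "1 \<le> k" and km: "k \<le> m" using k0_range[OF w] unfolding k_def by auto
  have cU': "card (U - {j}) = m - 1" if "j \<in> U" for j using that finU cardU by simp
  have kU: "k \<le> card U" using km cardU by simp
  have tauk: "tau j w = kth_smallest T (U - {j}) k" if "j \<in> U" for j
    unfolding tau_def T_def k_def using K that by simp
  have sel: "fst (w j) \<le> tau j w \<longleftrightarrow> fst (w j) \<le> kk w" if j: "j \<in> U" for j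
  proof -
    have "T j \<le> kth_smallest T U k \<longleftrightarrow> T j \<le> kth_smallest T (U - {j}) k"
      by (rule sel_iff[OF finU j k1]) (use cU'[OF j] kle k_def in simp)
    then show ?thesis unfolding tauk[OF j] kk_def T_def k_def by simp
  qed
  have teq: "tau j w = kk1 w" if j: "j \<in> U" and le: "fst (w j) \<le> tau j w" for j
  proof -
    have "kth_smallest T U (k + 1) = kth_smallest T (U - {j}) k"
      by (rule tau_eq[OF finU j k1]) (use cU'[OF j] kle k_def le tauk[OF j] T_def in simp_all)
    then show ?thesis unfolding tauk[OF j] kk1_def T_def k_def by simp
  qed
  have cardSu: "card {j\<in>U. fst (w j) \<le> kk w} = k"
    unfolding kk_def k_def[symmetric] using card_le_kth_eq[OF finU k1 kU, of T] inj unfolding T_def by simp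
  have kpos: "real k > 0" using k1 by simp
  have hh_eq: "hh j w = (if fst (w j) \<le> kk w \<and> QQ w < ereal (snd (w j)) then 1 else 0) / real k" if j: "j \<in> U" for j
  proof (cases "fst (w j) \<le> tau j w")
    case True
    then have "tau j w = kk1 w" by (rule teq[OF j])
    then show ?thesis unfolding hh_def QQ_def using True sel[OF j] K j k_def by simp
  next
    case False
    then show ?thesis unfolding hh_def using sel[OF j] K j k_def by simp
  qed
  have ll_eq: "ll j w = (if fst (w j) \<le> kk w then 1 / ((real n + 1) * F (kk1 w)) else 0) / real k" if j: "j \<in> U" for j
  proof (cases "fst (w j) \<le> tau j w")
    case True
    then have "tau j w = kk1 w" by (rule teq[OF j])
    then show ?thesis unfolding ll_def using True sel[OF j] K j k_def by simp
  next
    case False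
    then show ?thesis unfolding ll_def using sel[OF j] K j k_def by simp
  qed
  have ss_eq: "ss j w = (if fst (w j) \<le> kk w then 1 else 0) / real k" if j: "j \<in> U" for j
    unfolding ss_def using sel[OF j] K j k_def by simp
  show "FCRf w = (\<Sum>j\<in>U. hh j w)"
  proof -
    have "(\<Sum>j\<in>U. hh j w) = (\<Sum>j\<in>U. (if fst (w j) \<le> kk w \<and> QQ w < ereal (snd (w j)) then 1 else 0) / real k)"
      by (rule sum.cong[OF refl]) (rule hh_eq)
    also have "\<dots> = real (card {j\<in>U. fst (w j) \<le> kk w \<and> QQ w < ereal (snd (w j))}) * 1 / real k"
      by (rule sum_if_div[OF finU])
    finally show ?thesis unfolding FCRf_eq cardSu using k1 by simp
  qed
  show "LBf w = (\<Sum>j\<in>U. ll j w)"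
  proof -
    have "(\<Sum>j\<in>U. ll j w) = (\<Sum>j\<in>U. (if fst (w j) \<le> kk w then 1 / ((real n + 1) * F (kk1 w)) else 0) / real k)"
      by (rule sum.cong[OF refl]) (rule ll_eq)
    also have "\<dots> = real (card {j\<in>U. fst (w j) \<le> kk w}) * (1 / ((real n + 1) * F (kk1 w))) / real k"
      by (rule sum_if_div[OF finU])
    finally show ?thesis unfolding LBf_eq cardSu using kpos by simp
  qed
  show "(\<Sum>j\<in>U. ss j w) = 1"
  proof -
    have "(\<Sum>j\<in>U. ss j w) = (\<Sum>j\<in>U. (if fst (w j) \<le> kk w then 1 else 0) / real k)"
      by (rule sum.cong[OF refl]) (rule ss_eq)
    also have "\<dots> = real (card {j\<in>U. fst (w j) \<le> kk w}) * 1 / real k"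
      by (rule sum_if_div[OF finU])
    finally show ?thesis unfolding cardSu using kpos by simp
  qed
qed

end

context core begin

lemma perj_setup:
  assumes j: "j \<in> U"
  defines "U' \<equiv> U - {j}" and "J \<equiv> insert j C"
  shows "U' \<inter> J = {}" "finite U'" "finite J" "II = U' \<union> J" "card J = n + 1" "j \<notin> C"
proof -
  show jC: "j \<notin> C" using j disj by auto
  show "U' \<inter> J = {}" unfolding U'_def J_def using disj by auto
  show "finite U'" "finite J" unfolding U'_def J_def using finU finC by auto
  show "II = U' \<union> J" unfolding U'_def J_def II_def using j by auto
  show "card J = n + 1" unfolding J_def using jC finC cardC by simp
qed

definition "Kx j x = \<kappa> (restrict ((\<lambda>i. fst (x i))(j := t_u)) U)"
definition "tx j x = kth_smallest (\<lambda>i. fst (x i)) (U - {j}) (Kx j x)"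

lemma merge_eqs:
  assumes j: "j \<in> U"
  defines "U' \<equiv> U - {j}" and "J \<equiv> insert j C"
  shows "Kj j (merge U' J (x, y)) = Kx j x"
    and "tau j (merge U' J (x, y)) = tx j x"
    and "hh j (merge U' J (x, y)) = (if miss J (tx j x) y j then 1 else 0) / real (Kx j x)"
    and "ss j (merge U' J (x, y)) = (if fst (y j) \<le> tx j x then 1 else 0) / real (Kx j x)"
    and "ll j (merge U' J (x, y)) = (if fst (y j) \<le> tx j x then 1 / ((real n + 1) * F (tx j x)) else 0) / real (Kx j x)"
proof -
  have jC: "j \<notin> C" using j disj by auto
  let ?w = "merge U' J (x, y)"
  have wU: "?w i = x i" if "i \<in> U'" for i using that by (simp add: merge_def)
  have wJ: "?w i = y i" if "i \<in> J" for i using that disj unfolding U'_def J_def by (auto simp: merge_def)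
  have wj: "?w j = y j" using wJ J_def by simp
  have "restrict ((\<lambda>i. fst (?w i))(j := t_u)) U = restrict ((\<lambda>i. fst (x i))(j := t_u)) U"
    by (rule restrict_ext) (use wU U'_def in auto)
  then show K: "Kj j ?w = Kx j x" unfolding Kj_def Kx_def by simp
  have "kth_smallest (\<lambda>i. fst (?w i)) (U - {j}) (Kx j x) = kth_smallest (\<lambda>i. fst (x i)) (U - {j}) (Kx j x)"
    by (rule kth_cong) (use wU U'_def in auto)
  then show t: "tau j ?w = tx j x" unfolding tau_def tx_def K by simp
  have JC: "J - {j} = C" unfolding J_def using jC by auto
  have s1: "{i\<in>C. fst (?w i) \<le> tx j x} = {i\<in>J - {j}. fst (y i) \<le> tx j x}"
    unfolding JC using wJ J_def by auto
  have "conf_quantile \<alpha> (\<lambda>i. snd (?w i)) {i\<in>J - {j}. fst (y i) \<le> tx j x} = conf_quantile \<alpha> (\<lambda>i. snd (y i)) {i\<in>J - {j}. fst (y i) \<le> tx j x}"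
    by (rule conf_quantile_cong) (use wJ in auto)
  then show "hh j ?w = (if miss J (tx j x) y j then 1 else 0) / real (Kx j x)"
    unfolding hh_def miss_def K t s1 wj by simp
  show "ss j ?w = (if fst (y j) \<le> tx j x then 1 else 0) / real (Kx j x)"
    unfolding ss_def K t wj by simp
  show "ll j ?w = (if fst (y j) \<le> tx j x then 1 / ((real n + 1) * F (tx j x)) else 0) / real (Kx j x)"
    unfolding ll_def K t wj by simp
qed


lemma int_ind:
  fixes c :: real
  assumes M: "prob_space M" and A: "{y\<in>space M. P y} \<in> sets M"
  shows "integrable M (\<lambda>y. (if P y then c else 0) / d)"
    and "integral\<^sup>L M (\<lambda>y. (if P y then c else 0) / d) = c * measure M {y\<in>space M. P y} / d"
proof -
  interpret prob_space M by (rule M)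
  let ?A = "{y\<in>space M. P y}"
  have eq: "(if P y then c else 0) / d = (c / d) * indicator ?A y" if "y \<in> space M" for y
    using that by (auto simp: indicator_def)
  have iA: "integrable M (indicator ?A :: _ \<Rightarrow> real)"
    by (rule integrable_real_indicator[OF A]) (simp add: emeasure_finite top.not_eq_extremum[symmetric])
  have i2: "integrable M (\<lambda>y. (c / d) * indicator ?A y)" using iA by simp
  show "integrable M (\<lambda>y. (if P y then c else 0) / d)"
    using Bochner_Integration.integrable_cong[OF refl, of M "\<lambda>y. (if P y then c else 0) / d" "\<lambda>y. (c / d) * indicator ?A y"] i2 eq by simp
  have "integral\<^sup>L M (\<lambda>y. (if P y then c else 0) / d) = integral\<^sup>L M (\<lambda>y. (c / d) * indicator ?A y)"
    by (rule Bochner_Integration.integral_cong[OF refl]) (simp add: eq)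
  also have "\<dots> = c / d * measure M ?A" using A by (simp add: Int_absorb2 sets.sets_into_space)
  finally show "integral\<^sup>L M (\<lambda>y. (if P y then c else 0) / d) = c * measure M {y\<in>space M. P y} / d" by simp
qed

lemma inner_ints:
  assumes j: "j \<in> U"
  defines "U' \<equiv> U - {j}" and "J \<equiv> insert j C"
  shows "integrable (Pi\<^sub>M J (\<lambda>_. D)) (\<lambda>y. hh j (merge U' J (x, y)))"
    and "integral\<^sup>L (Pi\<^sub>M J (\<lambda>_. D)) (\<lambda>y. hh j (merge U' J (x, y)))
          = measure (Pi\<^sub>M J (\<lambda>_. D)) {y\<in>space (Pi\<^sub>M J (\<lambda>_. D)). miss J (tx j x) y j} / real (Kx j x)"
    and "integrable (Pi\<^sub>M J (\<lambda>_. D)) (\<lambda>y. ss j (merge U' J (x, y)))"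
    and "integral\<^sup>L (Pi\<^sub>M J (\<lambda>_. D)) (\<lambda>y. ss j (merge U' J (x, y))) = F (tx j x) / real (Kx j x)"
    and "integrable (Pi\<^sub>M J (\<lambda>_. D)) (\<lambda>y. ll j (merge U' J (x, y)))"
    and "integral\<^sup>L (Pi\<^sub>M J (\<lambda>_. D)) (\<lambda>y. ll j (merge U' J (x, y)))
          = 1 / ((real n + 1) * F (tx j x)) * F (tx j x) / real (Kx j x)"
proof -
  note st = perj_setup[OF j, folded U'_def J_def]
  note me = merge_eqs[OF j, folded U'_def J_def]
  have PJ: "prob_space (Pi\<^sub>M J (\<lambda>_. D))" by (rule prob_PK[OF st(3)])
  have jJ: "j \<in> J" unfolding J_def by simp
  have Es: "{y\<in>space (Pi\<^sub>M J (\<lambda>_. D)). miss J (tx j x) y j} \<in> sets (Pi\<^sub>M J (\<lambda>_. D))"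
    by (rule miss_sets[OF st(3) jJ])
  have Gs: "{y\<in>space (Pi\<^sub>M J (\<lambda>_. D)). fst (y j) \<le> tx j x} \<in> sets (Pi\<^sub>M J (\<lambda>_. D))"
    by (rule G_sets[OF st(3) jJ])
  have F: "measure (Pi\<^sub>M J (\<lambda>_. D)) {y\<in>space (Pi\<^sub>M J (\<lambda>_. D)). fst (y j) \<le> tx j x} = F (tx j x)"
    by (rule innerF[OF st(3) jJ])
  show "integrable (Pi\<^sub>M J (\<lambda>_. D)) (\<lambda>y. hh j (merge U' J (x, y)))"
    unfolding me by (rule int_ind(1)[OF PJ Es])
  show "integral\<^sup>L (Pi\<^sub>M J (\<lambda>_. D)) (\<lambda>y. hh j (merge U' J (x, y)))
          = measure (Pi\<^sub>M J (\<lambda>_. D)) {y\<in>space (Pi\<^sub>M J (\<lambda>_. D)). miss J (tx j x) y j} / real (Kx j x)"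
    unfolding me int_ind(2)[OF PJ Es] by simp
  show "integrable (Pi\<^sub>M J (\<lambda>_. D)) (\<lambda>y. ss j (merge U' J (x, y)))"
    unfolding me by (rule int_ind(1)[OF PJ Gs])
  show "integral\<^sup>L (Pi\<^sub>M J (\<lambda>_. D)) (\<lambda>y. ss j (merge U' J (x, y))) = F (tx j x) / real (Kx j x)"
    unfolding me int_ind(2)[OF PJ Gs] F by simp
  show "integrable (Pi\<^sub>M J (\<lambda>_. D)) (\<lambda>y. ll j (merge U' J (x, y)))"
    unfolding me by (rule int_ind(1)[OF PJ Gs])
  show "integral\<^sup>L (Pi\<^sub>M J (\<lambda>_. D)) (\<lambda>y. ll j (merge U' J (x, y)))
          = 1 / ((real n + 1) * F (tx j x)) * F (tx j x) / real (Kx j x)"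
    unfolding me int_ind(2)[OF PJ Gs] F by simp
qed

end

lemma bound_if_div: "\<bar>(if b then 1 else 0) / real (k::nat)\<bar> \<le> (1::real)"
  by (cases k) auto

lemma div_nat_le1: "0 \<le> (a::real) \<Longrightarrow> a \<le> 1 \<Longrightarrow> a / real (k::nat) \<le> 1"
  by (cases k) (auto simp: divide_le_eq)

lemma cF_eq:
  fixes f :: real and n :: nat
  assumes "0 \<le> f"
  shows "1 / ((real n + 1) * f) * f = (if f > 0 then 1 / (real n + 1) else 0)"
proof (cases "f = 0")
  case True then show ?thesis by simp
next
  case False
  then have f0: "f > 0" using assms by simp
  have "(real n + 1) * f > 0" using f0 by simp
  then have "1 / ((real n + 1) * f) * f = f / ((real n + 1) * f)" by simp
  also have "\<dots> = 1 / (real n + 1)" using f0 by simp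
  finally show ?thesis using f0 by simp
qed

context core begin

lemma F_nonneg: "0 \<le> F t" unfolding Fdef by simp

lemma perj:
  assumes j: "j \<in> U"
  shows "integral\<^sup>L PP (hh j) \<le> \<alpha> * integral\<^sup>L PP (ss j)"
    and "integrable PP (ll j)"
    and "\<alpha> * integral\<^sup>L PP (ss j) \<le> integral\<^sup>L PP (hh j) + integral\<^sup>L PP (ll j)"
proof -
  define U' where "U' = U - {j}"
  define J where "J = insert j C"
  note st = perj_setup[OF j, folded U'_def J_def]
  note ii = inner_ints[OF j, folded U'_def J_def]
  have jII: "j \<in> II" using j UII by auto
  have jJ: "j \<in> J" unfolding J_def by simp
  have PPeq: "PP = Pi\<^sub>M (U' \<union> J) (\<lambda>_. D)" using st(4) by simp
  interpret Q: prob_space PP by (rule prob_PK[OF finII])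
  have ihh: "integrable PP (hh j)"
  proof (rule Q.integrable_const_bound[where B=1])
    have "\<And>w. \<bar>hh j w\<bar> \<le> 1" unfolding hh_def by (rule bound_if_div)
    then show "AE x in PP. norm (hh j x) \<le> 1" by simp
  qed (rule hh_meas[OF jII])
  have iss: "integrable PP (ss j)"
  proof (rule Q.integrable_const_bound[where B=1])
    have "\<And>w. \<bar>ss j w\<bar> \<le> 1" unfolding ss_def by (rule bound_if_div)
    then show "AE x in PP. norm (ss j x) \<le> 1" by simp
  qed (rule ss_meas[OF jII])
  have fold: "integral\<^sup>L PP f = (\<integral>x. (\<integral>y. f (merge U' J (x, y)) \<partial>Pi\<^sub>M J (\<lambda>_. D)) \<partial>Pi\<^sub>M U' (\<lambda>_. D))"
    if "integrable PP f" for f :: "_ \<Rightarrow> real"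
    unfolding PPeq by (rule PD.product_integral_fold[OF st(1-3)]) (use that PPeq in simp)
  have f1i: "integrable PP (\<lambda>w. \<alpha> * ss j w - hh j w)" using ihh iss by simp
  have "0 \<le> integral\<^sup>L PP (\<lambda>w. \<alpha> * ss j w - hh j w)"
    unfolding fold[OF f1i]
  proof (rule Bochner_Integration.integral_nonneg)
    fix x
    have "(\<integral>y. \<alpha> * ss j (merge U' J (x, y)) - hh j (merge U' J (x, y)) \<partial>Pi\<^sub>M J (\<lambda>_. D))
        = \<alpha> * (F (tx j x) / real (Kx j x)) - measure (Pi\<^sub>M J (\<lambda>_. D)) {y\<in>space (Pi\<^sub>M J (\<lambda>_. D)). miss J (tx j x) y j} / real (Kx j x)"
      using ii by simp
    also have "\<dots> = (\<alpha> * F (tx j x) - measure (Pi\<^sub>M J (\<lambda>_. D)) {y\<in>space (Pi\<^sub>M J (\<lambda>_. D)). miss J (tx j x) y j}) / real (Kx j x)"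
      by (simp add: diff_divide_distrib)
    also have "0 \<le> \<dots>"
      using inner_bounds(1)[OF st(3) jJ, of "tx j x"] by simp
    finally show "0 \<le> (\<integral>y. \<alpha> * ss j (merge U' J (x, y)) - hh j (merge U' J (x, y)) \<partial>Pi\<^sub>M J (\<lambda>_. D))" .
  qed
  then show "integral\<^sup>L PP (hh j) \<le> \<alpha> * integral\<^sup>L PP (ss j)" using ihh iss by simp
  have ll_nn: "0 \<le> ll j w" for w unfolding ll_def using F_nonneg by simp
  have llm: "ll j \<in> borel_measurable PP" by (rule ll_meas[OF jII])
  have "(\<integral>\<^sup>+w. ennreal (norm (ll j w)) \<partial>PP) = (\<integral>\<^sup>+w. ennreal (ll j w) \<partial>PP)"
    using ll_nn by simp
  also have "\<dots> = (\<integral>\<^sup>+x. (\<integral>\<^sup>+y. ennreal (ll j (merge U' J (x, y))) \<partial>Pi\<^sub>M J (\<lambda>_. D)) \<partial>Pi\<^sub>M U' (\<lambda>_. D))"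
    unfolding PPeq by (rule PD.product_nn_integral_fold[OF st(1-3)]) (use llm PPeq in simp)
  also have "\<dots> \<le> (\<integral>\<^sup>+x. 1 \<partial>Pi\<^sub>M U' (\<lambda>_. D))"
  proof (rule nn_integral_mono)
    fix x
    have "(\<integral>\<^sup>+y. ennreal (ll j (merge U' J (x, y))) \<partial>Pi\<^sub>M J (\<lambda>_. D)) = ennreal (\<integral>y. ll j (merge U' J (x, y)) \<partial>Pi\<^sub>M J (\<lambda>_. D))"
      by (rule nn_integral_eq_integral[OF ii(5)]) (simp add: ll_nn)
    also have "\<dots> = ennreal (1 / ((real n + 1) * F (tx j x)) * F (tx j x) / real (Kx j x))" using ii(6) by simp
    also have "\<dots> \<le> 1"
    proof -
      have "1 / ((real n + 1) * F (tx j x)) * F (tx j x) \<le> 1"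
        using cF_eq[OF F_nonneg, of n "tx j x"] by (auto simp: field_simps)
      moreover have "1 / ((real n + 1) * F (tx j x)) * F (tx j x) \<ge> 0" using F_nonneg by simp
      ultimately have "1 / ((real n + 1) * F (tx j x)) * F (tx j x) / real (Kx j x) \<le> 1"
        by (blast intro: div_nat_le1)
      then show ?thesis by simp
    qed
    finally show "(\<integral>\<^sup>+y. ennreal (ll j (merge U' J (x, y))) \<partial>Pi\<^sub>M J (\<lambda>_. D)) \<le> 1" .
  qed
  also have "\<dots> = 1"
    using prob_space.emeasure_space_1[OF prob_PK[OF st(2)]] by simp
  finally have "(\<integral>\<^sup>+w. ennreal (norm (ll j w)) \<partial>PP) < \<infinity>" by (simp add: le_less_trans)
  then show ill: "integrable PP (ll j)" by (rule integrableI_bounded[OF llm])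
  have f2i: "integrable PP (\<lambda>w. hh j w + ll j w - \<alpha> * ss j w)" using ihh iss ill by simp
  have "0 \<le> integral\<^sup>L PP (\<lambda>w. hh j w + ll j w - \<alpha> * ss j w)"
    unfolding fold[OF f2i]
  proof (rule Bochner_Integration.integral_nonneg)
    fix x :: "nat \<Rightarrow> real \<times> real"
    let ?mu = "measure (Pi\<^sub>M J (\<lambda>_. D)) {y\<in>space (Pi\<^sub>M J (\<lambda>_. D)). miss J (tx j x) y j}"
    let ?f = "F (tx j x)"
    have "(\<integral>y. hh j (merge U' J (x, y)) + ll j (merge U' J (x, y)) - \<alpha> * ss j (merge U' J (x, y)) \<partial>Pi\<^sub>M J (\<lambda>_. D))
        = ?mu / real (Kx j x) + 1 / ((real n + 1) * ?f) * ?f / real (Kx j x) - \<alpha> * (?f / real (Kx j x))"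
      using ii by simp
    also have "\<dots> = (?mu + (if ?f > 0 then 1 / (real n + 1) else 0) - \<alpha> * ?f) / real (Kx j x)"
      using cF_eq[OF F_nonneg, of n "tx j x"] by (simp add: add_divide_distrib diff_divide_distrib)
    also have "0 \<le> \<dots>"
    proof -
      have cJ: "real (card J) = real n + 1" using st(5) by simp
      have "0 \<le> ?mu + (if ?f > 0 then 1 / (real n + 1) else 0) - \<alpha> * ?f"
        using inner_bounds(2)[OF st(3) jJ, of "tx j x", unfolded cJ] by (auto split: if_splits)
      then show ?thesis by simp
    qed
    finally show "0 \<le> (\<integral>y. hh j (merge U' J (x, y)) + ll j (merge U' J (x, y)) - \<alpha> * ss j (merge U' J (x, y)) \<partial>Pi\<^sub>M J (\<lambda>_. D))" .
  qed
  then show "\<alpha> * integral\<^sup>L PP (ss j) \<le> integral\<^sup>L PP (hh j) + integral\<^sup>L PP (ll j)"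
    using ihh iss ill by simp
qed

end

context core begin

lemma core_main:
  assumes AEk: "AE w in PP. (\<forall>j\<in>U. Kj j w = k0 w) \<and> k0 w \<le> m - 1"
  shows "\<alpha> - integral\<^sup>L PP LBf \<le> integral\<^sup>L PP FCRf \<and> integral\<^sup>L PP FCRf \<le> \<alpha>"
proof -
  interpret Q: prob_space PP by (rule prob_PK[OF finII])
  have injAE: "AE w in PP. inj_on (\<lambda>i. fst (w i)) U"
    by (rule inj_AE[OF finII UII fstD contT])
  have good: "AE w in PP. FCRf w = (\<Sum>j\<in>U. hh j w) \<and> LBf w = (\<Sum>j\<in>U. ll j w) \<and> (\<Sum>j\<in>U. ss j w) = 1"
    using AEk injAE AE_space
  proof eventually_elim
    case (elim w)
    then show ?case using pointwise[of w] by auto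
  qed
  have UII': "\<And>j. j \<in> U \<Longrightarrow> j \<in> II" using UII by auto
  have ihh: "integrable PP (hh j)" if "j \<in> U" for j
  proof (rule Q.integrable_const_bound[where B=1])
    have "\<And>w. \<bar>hh j w\<bar> \<le> 1" unfolding hh_def by (rule bound_if_div)
    then show "AE x in PP. norm (hh j x) \<le> 1" by simp
  qed (rule hh_meas[OF UII'[OF that]])
  have iss: "integrable PP (ss j)" if "j \<in> U" for j
  proof (rule Q.integrable_const_bound[where B=1])
    have "\<And>w. \<bar>ss j w\<bar> \<le> 1" unfolding ss_def by (rule bound_if_div)
    then show "AE x in PP. norm (ss j x) \<le> 1" by simp
  qed (rule ss_meas[OF UII'[OF that]])
  have ill: "integrable PP (ll j)" if "j \<in> U" for j by (rule perj(2)[OF that])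
  have IF: "integral\<^sup>L PP FCRf = (\<Sum>j\<in>U. integral\<^sup>L PP (hh j))"
  proof -
    have "integral\<^sup>L PP FCRf = integral\<^sup>L PP (\<lambda>w. \<Sum>j\<in>U. hh j w)"
    proof (rule integral_cong_AE)
      show "FCRf \<in> borel_measurable PP" by (rule FCRf_meas)
      show "(\<lambda>w. \<Sum>j\<in>U. hh j w) \<in> borel_measurable PP"
        using hh_meas UII' by (intro borel_measurable_sum) auto
      show "AE w in PP. FCRf w = (\<Sum>j\<in>U. hh j w)" using good by eventually_elim auto
    qed
    also have "\<dots> = (\<Sum>j\<in>U. integral\<^sup>L PP (hh j))"
      by (rule Bochner_Integration.integral_sum) (rule ihh)
    finally show ?thesis .
  qed
  have IL: "integral\<^sup>L PP LBf = (\<Sum>j\<in>U. integral\<^sup>L PP (ll j))"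
  proof -
    have "integral\<^sup>L PP LBf = integral\<^sup>L PP (\<lambda>w. \<Sum>j\<in>U. ll j w)"
    proof (rule integral_cong_AE)
      show "LBf \<in> borel_measurable PP" by (rule LBf_meas)
      show "(\<lambda>w. \<Sum>j\<in>U. ll j w) \<in> borel_measurable PP"
        using ll_meas UII' by (intro borel_measurable_sum) auto
      show "AE w in PP. LBf w = (\<Sum>j\<in>U. ll j w)" using good by eventually_elim auto
    qed
    also have "\<dots> = (\<Sum>j\<in>U. integral\<^sup>L PP (ll j))"
      by (rule Bochner_Integration.integral_sum) (rule ill)
    finally show ?thesis .
  qed
  have IS: "(\<Sum>j\<in>U. integral\<^sup>L PP (ss j)) = 1"
  proof -
    have "(\<Sum>j\<in>U. integral\<^sup>L PP (ss j)) = integral\<^sup>L PP (\<lambda>w. \<Sum>j\<in>U. ss j w)"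
      by (rule Bochner_Integration.integral_sum[symmetric]) (rule iss)
    also have "\<dots> = integral\<^sup>L PP (\<lambda>w. 1)"
    proof (rule integral_cong_AE)
      show "(\<lambda>w. \<Sum>j\<in>U. ss j w) \<in> borel_measurable PP"
        using ss_meas UII' by (intro borel_measurable_sum) auto
      show "(\<lambda>w. 1) \<in> borel_measurable PP" by simp
      show "AE w in PP. (\<Sum>j\<in>U. ss j w) = 1" using good by eventually_elim auto
    qed
    also have "\<dots> = 1" by (simp add: Q.prob_space)
    finally show ?thesis .
  qed
  have up: "integral\<^sup>L PP FCRf \<le> \<alpha>"
  proof -
    have "integral\<^sup>L PP FCRf \<le> (\<Sum>j\<in>U. \<alpha> * integral\<^sup>L PP (ss j))"
      unfolding IF by (rule sum_mono) (rule perj(1))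
    also have "\<dots> = \<alpha>" using IS by (simp add: sum_distrib_left[symmetric])
    finally show ?thesis .
  qed
  have low: "\<alpha> \<le> integral\<^sup>L PP FCRf + integral\<^sup>L PP LBf"
  proof -
    have "\<alpha> = (\<Sum>j\<in>U. \<alpha> * integral\<^sup>L PP (ss j))" using IS by (simp add: sum_distrib_left[symmetric])
    also have "\<dots> \<le> (\<Sum>j\<in>U. integral\<^sup>L PP (hh j) + integral\<^sup>L PP (ll j))"
      by (rule sum_mono) (rule perj(3))
    also have "\<dots> = integral\<^sup>L PP FCRf + integral\<^sup>L PP LBf"
      unfolding IF IL by (simp add: sum.distrib)
    finally show ?thesis .
  qed
  show ?thesis using up low by simp
qed

end

theorem theorem2:
  fixes M :: "'a measure"
    and X :: "nat \<Rightarrow> 'a \<Rightarrow> 'd::euclidean_space"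
    and Y :: "nat \<Rightarrow> 'a \<Rightarrow> real"
    and mu g :: "'d \<Rightarrow> real"
    and C U :: "nat set"
    and n m :: nat
    and \<alpha> t_u :: real
    and \<kappa> :: "(nat \<Rightarrow> real) \<Rightarrow> nat"
    and F :: "real \<Rightarrow> real"
  assumes M: "prob_space M"
    and mu_meas: "mu \<in> borel_measurable borel"
    and g_meas: "g \<in> borel_measurable borel"
    and finC: "finite C" and finU: "finite U"
    and disj: "C \<inter> U = {}"
    and cardC: "card C = n" and cardU: "card U = m" and m2: "m \<ge> 2"
    and alpha: "0 < \<alpha>" "\<alpha> < 1"
    and rv: "\<And>i. i \<in> C \<union> U \<Longrightarrow> (\<lambda>\<omega>. (X i \<omega>, Y i \<omega>)) \<in> borel_measurable M"
    and indep: "prob_space.indep_vars M (\<lambda>_. borel) (\<lambda>i \<omega>. (X i \<omega>, Y i \<omega>)) (C \<union> U)"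
    and ident: "\<And>i j. i \<in> C \<union> U \<Longrightarrow> j \<in> C \<union> U \<Longrightarrow>
                  distr M borel (\<lambda>\<omega>. (X i \<omega>, Y i \<omega>)) = distr M borel (\<lambda>\<omega>. (X j \<omega>, Y j \<omega>))"
    and T_cont: "\<And>i t. i \<in> C \<union> U \<Longrightarrow> measure M {\<omega> \<in> space M. g (X i \<omega>) = t} = 0"
    and R_cont: "\<And>i r. i \<in> C \<union> U \<Longrightarrow> measure M {\<omega> \<in> space M. \<bar>Y i \<omega> - mu (X i \<omega>)\<bar> = r} = 0"
    and F_cdf: "\<And>i t. i \<in> C \<union> U \<Longrightarrow> F t = measure M {\<omega> \<in> space M. g (X i \<omega>) \<le> t}"
    and kappa_meas: "\<kappa> \<in> measurable (Pi\<^sub>M U (\<lambda>_. borel)) (count_space UNIV)"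
    and kappa_range: "\<And>v. v \<in> space (Pi\<^sub>M U (\<lambda>_. borel)) \<Longrightarrow> \<kappa> v \<in> {1..m}"
    and kappa_inv: "AE \<omega> in M. \<forall>j \<in> U.
          \<kappa> (restrict ((\<lambda>i. g (X i \<omega>))(j := t_u)) U) = \<kappa> (restrict (\<lambda>i. g (X i \<omega>)) U)"
    and kappa_le: "AE \<omega> in M. \<kappa> (restrict (\<lambda>i. g (X i \<omega>)) U) \<le> m - 1"
  shows
   "\<alpha> - (\<integral>\<omega>. 1 / ((real n + 1) *
            F (kth_smallest (\<lambda>i. g (X i \<omega>)) U (\<kappa> (restrict (\<lambda>i. g (X i \<omega>)) U) + 1))) \<partial>M)
      \<le> (\<integral>\<omega>. (let T = (\<lambda>i. g (X i \<omega>));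
                   k = \<kappa> (restrict T U);
                   Su = sel_test T U k;
                   Q = conf_quantile \<alpha> (\<lambda>i. \<bar>Y i \<omega> - mu (X i \<omega>)\<bar>) (sel_calib_plus T C U k)
               in real (card {j \<in> Su. Y j \<omega> \<notin> pred_int (mu (X j \<omega>)) Q}) / real (max (card Su) 1)) \<partial>M)
    \<and> (\<integral>\<omega>. (let T = (\<lambda>i. g (X i \<omega>));
                   k = \<kappa> (restrict T U);
                   Su = sel_test T U k;
                   Q = conf_quantile \<alpha> (\<lambda>i. \<bar>Y i \<omega> - mu (X i \<omega>)\<bar>) (sel_calib_plus T C U k)
               in real (card {j \<in> Su. Y j \<omega> \<notin> pred_int (mu (X j \<omega>)) Q}) / real (max (card Su) 1)) \<partial>M)
      \<le> \<alpha>"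
proof -
  interpret prob_space M by (rule M)
  define I0 where "I0 = C \<union> U"
  obtain i0 where i0: "i0 \<in> U" using m2 cardU by (metis card.empty ex_in_conv not_numeral_le_zero)
  have i0I: "i0 \<in> I0" using i0 I0_def by simp
  define \<phi> :: "'d \<times> real \<Rightarrow> real \<times> real" where "\<phi> p = (g (fst p), \<bar>snd p - mu (fst p)\<bar>)" for p
  have phim: "\<phi> \<in> borel_measurable borel"
  proof -
    have f: "(fst :: 'd \<times> real \<Rightarrow> 'd) \<in> borel_measurable borel"
      by (intro borel_measurable_continuous_onI continuous_intros)
    have s: "(snd :: 'd \<times> real \<Rightarrow> real) \<in> borel_measurable borel"
      by (intro borel_measurable_continuous_onI continuous_intros)
    have g1: "(\<lambda>p::'d \<times> real. g (fst p)) \<in> borel_measurable borel" using f g_meas by (rule measurable_compose)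
    have m1: "(\<lambda>p::'d \<times> real. mu (fst p)) \<in> borel_measurable borel" using f mu_meas by (rule measurable_compose)
    have "(\<lambda>p::'d \<times> real. \<bar>snd p - mu (fst p)\<bar>) \<in> borel_measurable borel"
      using s m1 by measurable
    then show ?thesis unfolding \<phi>_def using g1 by (intro borel_measurable_Pair) auto
  qed
  define W where "W i \<omega> = \<phi> (X i \<omega>, Y i \<omega>)" for i \<omega>
  have Wm: "W i \<in> borel_measurable M" if "i \<in> I0" for i
    unfolding W_def using rv[of i] that I0_def phim by (intro measurable_compose[OF _ phim]) auto
  define D where "D = distr M borel (W i0)"
  have distrW: "distr M borel (W i) = D" if "i \<in> I0" for i
  proof -
    have "distr M borel (W i) = distr (distr M borel (\<lambda>\<omega>. (X i \<omega>, Y i \<omega>))) borel \<phi>"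
      unfolding W_def using rv[of i] that I0_def phim by (subst distr_distr) (auto simp: comp_def)
    also have "\<dots> = distr (distr M borel (\<lambda>\<omega>. (X i0 \<omega>, Y i0 \<omega>))) borel \<phi>"
      using ident[of i i0] that i0 I0_def by simp
    also have "\<dots> = distr M borel (W i0)"
      unfolding W_def using rv[of i0] i0 phim by (subst distr_distr) (auto simp: comp_def)
    finally show ?thesis unfolding D_def .
  qed
  have indW: "indep_vars (\<lambda>_. borel) W I0"
    unfolding W_def I0_def using indep phim by (rule indep_vars_compose2) 
  define Wv where "Wv \<omega> = (\<lambda>i\<in>I0. W i \<omega>)" for \<omega>
  have Wvm: "Wv \<in> measurable M (Pi\<^sub>M I0 (\<lambda>_. borel))"
    unfolding Wv_def by (rule measurable_restrict) (rule Wm)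
  have distrWv: "distr M (Pi\<^sub>M I0 (\<lambda>_. borel)) Wv = Pi\<^sub>M I0 (\<lambda>_. D)"
  proof -
    have "distr M (Pi\<^sub>M I0 (\<lambda>_. borel)) Wv = Pi\<^sub>M I0 (\<lambda>i. distr M borel (W i))"
      using indW unfolding Wv_def
      by (subst (asm) indep_vars_iff_distr_eq_PiM') (use I0_def i0 Wm in auto)
    also have "\<dots> = Pi\<^sub>M I0 (\<lambda>_. D)"
      by (rule PiM_cong) (auto simp: distrW)
    finally show ?thesis .
  qed
  have WvE: "fst (Wv \<omega> i) = g (X i \<omega>)" "snd (Wv \<omega> i) = \<bar>Y i \<omega> - mu (X i \<omega>)\<bar>" if "i \<in> I0" for i \<omega>
    using that unfolding Wv_def W_def \<phi>_def by auto
  have pD: "prob_space D" unfolding D_def by (rule prob_space_distr[OF Wm[OF i0I]])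
  have sD: "sets D = sets borel" unfolding D_def by simp
  have spD: "space D = UNIV" unfolding D_def by simp
  have fstb: "(fst :: real \<times> real \<Rightarrow> real) \<in> borel_measurable borel"
    by (intro borel_measurable_continuous_onI continuous_intros)
  have sndb: "(snd :: real \<times> real \<Rightarrow> real) \<in> borel_measurable borel"
    by (intro borel_measurable_continuous_onI continuous_intros)
  have eqset: "{z::real\<times>real. h z = c} \<in> sets borel" if "h \<in> borel_measurable borel" for h :: "real \<times> real \<Rightarrow> real" and c
  proof -
    have "{z\<in>space borel. h z = c} \<in> sets (borel :: (real \<times> real) measure)"
      by (rule borel_measurable_eq[OF that measurable_const]) simp
    then show ?thesis by simp
  qed
  have leset: "{z::real\<times>real. fst z \<le> c} \<in> sets borel" for c
  proof -
    have "{z\<in>space borel. fst z \<le> c} \<in> sets (borel :: (real \<times> real) measure)"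
      by (rule borel_measurable_le[OF fstb measurable_const]) simp
    then show ?thesis by simp
  qed
  have contT': "emeasure D {z\<in>space D. fst z = c} = 0" for c
  proof -
    have "emeasure D {z\<in>space D. fst z = c} = emeasure M (W i0 -` {z. fst z = c} \<inter> space M)"
      unfolding D_def spD[unfolded D_def] using eqset[OF fstb] by (simp add: emeasure_distr Wm[OF i0I])
    also have "W i0 -` {z. fst z = c} \<inter> space M = {\<omega>\<in>space M. g (X i0 \<omega>) = c}"
      unfolding W_def \<phi>_def by auto
    also have "emeasure M {\<omega>\<in>space M. g (X i0 \<omega>) = c} = 0"
    proof -
      have "{\<omega>\<in>space M. g (X i0 \<omega>) = c} = W i0 -` {z. fst z = c} \<inter> space M"
        unfolding W_def \<phi>_def by auto
      then have "{\<omega>\<in>space M. g (X i0 \<omega>) = c} \<in> events"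
        using measurable_sets[OF Wm[OF i0I] eqset[OF fstb]] by simp
      then show ?thesis using T_cont[of i0 c] i0 by (simp add: emeasure_eq_measure)
    qed
    finally show ?thesis .
  qed
  have contR': "emeasure D {z\<in>space D. snd z = c} = 0" for c
  proof -
    have "emeasure D {z\<in>space D. snd z = c} = emeasure M (W i0 -` {z. snd z = c} \<inter> space M)"
      unfolding D_def spD[unfolded D_def] using eqset[OF sndb] by (simp add: emeasure_distr Wm[OF i0I])
    also have "W i0 -` {z. snd z = c} \<inter> space M = {\<omega>\<in>space M. \<bar>Y i0 \<omega> - mu (X i0 \<omega>)\<bar> = c}"
      unfolding W_def \<phi>_def by auto
    also have "emeasure M {\<omega>\<in>space M. \<bar>Y i0 \<omega> - mu (X i0 \<omega>)\<bar> = c} = 0"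
    proof -
      have "{\<omega>\<in>space M. \<bar>Y i0 \<omega> - mu (X i0 \<omega>)\<bar> = c} = W i0 -` {z. snd z = c} \<inter> space M"
        unfolding W_def \<phi>_def by auto
      then have "{\<omega>\<in>space M. \<bar>Y i0 \<omega> - mu (X i0 \<omega>)\<bar> = c} \<in> events"
        using measurable_sets[OF Wm[OF i0I] eqset[OF sndb]] by simp
      then show ?thesis using R_cont[of i0 c] i0 by (simp add: emeasure_eq_measure)
    qed
    finally show ?thesis .
  qed
  have Fdef': "F t = measure D {z\<in>space D. fst z \<le> t}" for t
  proof -
    have "measure D {z\<in>space D. fst z \<le> t} = measure M (W i0 -` {z. fst z \<le> t} \<inter> space M)"
      unfolding D_def spD[unfolded D_def] using leset by (simp add: measure_distr Wm[OF i0I])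
    also have "W i0 -` {z. fst z \<le> t} \<inter> space M = {\<omega>\<in>space M. g (X i0 \<omega>) \<le> t}"
      unfolding W_def \<phi>_def by auto
    finally show ?thesis using F_cdf[of i0 t] i0 by simp
  qed
  interpret C: core D C U n m \<alpha> t_u \<kappa> F
    by (rule core.intro[OF pD sD finC finU disj cardC cardU m2 alpha(1) alpha(2) contT' contR' Fdef' kappa_meas kappa_range])
  have II0: "C.II = I0" unfolding C.II_def I0_def by simp
  have UI0: "U \<subseteq> I0" and CI0: "C \<subseteq> I0" unfolding I0_def by auto
  have setsP: "sets (Pi\<^sub>M I0 (\<lambda>_. borel)) = sets C.PP"
    unfolding II0 by (rule sets_PiM_cong) (auto simp: sD)
  have spP: "space (Pi\<^sub>M I0 (\<lambda>_. borel)) = space C.PP"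
    using sets_eq_imp_space_eq[OF setsP] .
  have distrPP: "distr M (Pi\<^sub>M I0 (\<lambda>_. borel)) Wv = C.PP" using distrWv II0 by simp
  have measP: "f \<in> borel_measurable (Pi\<^sub>M I0 (\<lambda>_. borel))" if "f \<in> borel_measurable C.PP" for f :: "_ \<Rightarrow> real"
    using that measurable_cong_sets[OF setsP refl] by blast
  have rT: "restrict (\<lambda>i. fst (Wv \<omega> i)) U = restrict (\<lambda>i. g (X i \<omega>)) U" for \<omega>
    by (rule restrict_ext) (use WvE UI0 in auto)
  have rTj: "restrict ((\<lambda>i. fst (Wv \<omega> i))(j := t_u)) U = restrict ((\<lambda>i. g (X i \<omega>))(j := t_u)) U" for \<omega> j
    by (rule restrict_ext) (use WvE UI0 in auto)
  define Pg where "Pg w \<longleftrightarrow> (\<forall>j\<in>U. C.Kj j w = C.k0 w) \<and> C.k0 w \<le> m - 1" for w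
  have Pgs: "{w\<in>space C.PP. Pg w} \<in> sets C.PP"
  proof -
    have rK: "(\<lambda>w. real (C.Kj j w)) \<in> borel_measurable C.PP" for j by (rule C.real_nat_meas[OF C.Kj_meas])
    have rk: "(\<lambda>w. real (C.k0 w)) \<in> borel_measurable C.PP" by (rule C.real_nat_meas[OF C.k0_meas])
    have "{w\<in>space C.PP. Pg w} = {w\<in>space C.PP. \<forall>j\<in>U. real (C.Kj j w) = real (C.k0 w)} \<inter> {w\<in>space C.PP. real (C.k0 w) \<le> real (m - 1)}"
      unfolding Pg_def by auto
    also have "\<dots> \<in> sets C.PP"
    proof (rule sets.Int)
      show "{w\<in>space C.PP. \<forall>j\<in>U. real (C.Kj j w) = real (C.k0 w)} \<in> sets C.PP"
        by (rule sets.sets_Collect_finite_All[OF _ finU]) (rule borel_measurable_eq[OF rK rk])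
      show "{w\<in>space C.PP. real (C.k0 w) \<le> real (m - 1)} \<in> sets C.PP"
        by (rule borel_measurable_le[OF rk measurable_const]) simp
    qed
    finally show ?thesis .
  qed
  have AEM: "AE \<omega> in M. Pg (Wv \<omega>)"
    using kappa_inv kappa_le
  proof eventually_elim
    case (elim \<omega>)
    then show ?case unfolding Pg_def C.Kj_def C.k0_def rT rTj by simp
  qed
  have AEP: "AE w in C.PP. Pg w"
  proof -
    have "{w\<in>space (Pi\<^sub>M I0 (\<lambda>_. borel)). Pg w} \<in> sets (Pi\<^sub>M I0 (\<lambda>_. borel))"
      using Pgs unfolding spP setsP .
    then have "(AE w in distr M (Pi\<^sub>M I0 (\<lambda>_. borel)) Wv. Pg w) \<longleftrightarrow> (AE \<omega> in M. Pg (Wv \<omega>))"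
      by (rule AE_distr_iff[OF Wvm])
    then have "AE w in distr M (Pi\<^sub>M I0 (\<lambda>_. borel)) Wv. Pg w" using AEM by simp
    then show ?thesis unfolding distrPP .
  qed
  have main: "\<alpha> - integral\<^sup>L C.PP C.LBf \<le> integral\<^sup>L C.PP C.FCRf \<and> integral\<^sup>L C.PP C.FCRf \<le> \<alpha>"
    by (rule C.core_main) (use AEP in \<open>simp add: Pg_def\<close>)
  have iF: "integral\<^sup>L C.PP C.FCRf = (\<integral>\<omega>. C.FCRf (Wv \<omega>) \<partial>M)"
    using integral_distr[OF Wvm measP[OF C.FCRf_meas]] distrPP by simp
  have iL: "integral\<^sup>L C.PP C.LBf = (\<integral>\<omega>. C.LBf (Wv \<omega>) \<partial>M)"
    using integral_distr[OF Wvm measP[OF C.LBf_meas]] distrPP by simp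
  have pred_iff: "y \<notin> pred_int mu Q \<longleftrightarrow> Q < ereal \<bar>y - mu\<bar>" for y mu :: real and Q :: ereal
    by (cases Q) (auto simp: pred_int_def abs_if)
  have LBeq: "1 / ((real n + 1) * F (kth_smallest (\<lambda>i. g (X i \<omega>)) U (\<kappa> (restrict (\<lambda>i. g (X i \<omega>)) U) + 1)))
     = C.LBf (Wv \<omega>)" for \<omega>
  proof -
    have "kth_smallest (\<lambda>i. fst (Wv \<omega> i)) U (\<kappa> (restrict (\<lambda>i. g (X i \<omega>)) U) + 1)
        = kth_smallest (\<lambda>i. g (X i \<omega>)) U (\<kappa> (restrict (\<lambda>i. g (X i \<omega>)) U) + 1)"
      by (rule kth_cong) (use WvE UI0 in auto)
    then show ?thesis unfolding C.LBf_def rT by simp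
  qed
  have FCReq: "(let T = (\<lambda>i. g (X i \<omega>));
                   k = \<kappa> (restrict T U);
                   Su = sel_test T U k;
                   Q = conf_quantile \<alpha> (\<lambda>i. \<bar>Y i \<omega> - mu (X i \<omega>)\<bar>) (sel_calib_plus T C U k)
               in real (card {j \<in> Su. Y j \<omega> \<notin> pred_int (mu (X j \<omega>)) Q}) / real (max (card Su) 1))
     = C.FCRf (Wv \<omega>)" for \<omega>
  proof -
    define T where "T = (\<lambda>i. g (X i \<omega>))"
    define T' where "T' = (\<lambda>i. fst (Wv \<omega> i))"
    define k where "k = \<kappa> (restrict T U)"
    have kk': "\<kappa> (restrict T' U) = k" unfolding k_def T_def T'_def rT ..
    have kc: "kth_smallest T' U r = kth_smallest T U r" for r
      by (rule kth_cong) (use WvE UI0 in \<open>auto simp: T_def T'_def\<close>)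
    have Su: "sel_test T' U k = sel_test T U k"
      unfolding sel_test_def kc using WvE UI0 by (auto simp: T_def T'_def)
    have Sc: "sel_calib_plus T' C U k = sel_calib_plus T C U k"
      unfolding sel_calib_plus_def kc using WvE CI0 by (auto simp: T_def T'_def)
    have SuU: "sel_test T U k \<subseteq> U" unfolding sel_test_def by auto
    have ScC: "sel_calib_plus T C U k \<subseteq> C" unfolding sel_calib_plus_def by auto
    have Qe: "conf_quantile \<alpha> (\<lambda>i. snd (Wv \<omega> i)) (sel_calib_plus T C U k)
            = conf_quantile \<alpha> (\<lambda>i. \<bar>Y i \<omega> - mu (X i \<omega>)\<bar>) (sel_calib_plus T C U k)"
      by (rule conf_quantile_cong) (use WvE ScC CI0 in auto)
    let ?Q = "conf_quantile \<alpha> (\<lambda>i. \<bar>Y i \<omega> - mu (X i \<omega>)\<bar>) (sel_calib_plus T C U k)"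
    have cs: "{j \<in> sel_test T U k. Y j \<omega> \<notin> pred_int (mu (X j \<omega>)) ?Q}
        = {j \<in> sel_test T U k. ?Q < ereal (snd (Wv \<omega> j))}"
      using SuU UI0 WvE pred_iff by auto
    show ?thesis unfolding C.FCRf_def Let_def T'_def[symmetric] kk' Su Sc Qe
      unfolding T_def[symmetric] k_def[symmetric] cs ..
  qed
  show ?thesis
    unfolding FCReq LBeq using main iF iL by simp
qed

end
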